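(* Let $\mathbf v\in\mathbb R_{>0}^m$, $\tau=\sum_iv_i^2k_i$, and let $\mathcal V\in\mathcal P_{\mathbf v}(m,\mathbf k,d)$ be irreducible. Then the following are equivalent: (1) $(\mathcal V,\mathcal V^\#)$ is a local $d_P$-minimizer of the joint potential on $\mathcal{DRS}_{\mathbf v}$; (2) $(\mathcal V,\mathcal V^\#)$ is a global minimizer of the joint potential on $\mathcal{DRS}_{\mathbf v}$; (3) $\mathcal V$ is tight, i.e. $S_{\mathcal V}=\frac{\tau}{d}I_d$.
   Context: Fix integers $m,d\ge1$ and $\mathbf k=(k_1,\dots,k_m)\in\mathbb N^m$ with each $k_i\le d$. A system is an $m$-tuple $\mathcal V=(V_i)_{i=1}^m$ with $V_i\in L(\mathbb C^d,\mathbb C^{k_i})$; its RS operator is $S_{\mathcal V}=\sum_iV_i^*V_i$, and $\mathcal V$ is a reconstruction system (RS) if $S_{\mathcal V}$ is invertible; $\mathcal{RS}(m,\mathbf k,d)$ is the set of RS's. Given weights $\mathbf v\in\mathbb R_{>0}^m$, $\mathcal P_{\mathbf v}(m,\mathbf k,d)$ is the set of RS's with $V_iV_i^*=v_i^2I_{k_i}$ for all $i$. $\mathcal V\in\mathcal P_{\mathbf v}$ is irreducible if the commutant $\{A\in M_d(\mathbb C):AV_i^*V_i=V_i^*V_iA\ \forall i\}$ equals $\mathbb CI_d$. The canonical dual is $\mathcal V^\#=(V_iS_{\mathcal V}^{-1})_i$; $\mathcal W\in\mathcal{RS}$ is a dual of $\mathcal V$ if $\sum_iW_i^*V_i=I_d$,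 and $\mathcal D(\mathcal V)$ is the set of duals. $\mathcal{DRS}_{\mathbf v}=\{(\mathcal V,\mathcal W)\in\mathcal P_{\mathbf v}\times\mathcal{RS}(m,\mathbf k,d):\mathcal W\in\mathcal D(\mathcal V)\}$, joint potential $\mathrm{FP}(\mathcal V,\mathcal W)=\operatorname{tr}S_{\mathcal V}^2+\operatorname{tr}S_{\mathcal W}^2$. The metric $d_P(\mathcal V,\mathcal W)=(\sum_i\|V_i-W_i\|_2^2)^{1/2}$ uses the Frobenius norm. A pair in $\mathcal{DRS}_{\mathbf v}$ is a local $d_P$-minimizer of FP if there is $\varepsilon>0$ with $\mathrm{FP}(\mathcal V',\mathcal W')\ge\mathrm{FP}(\mathcal V,\mathcal W)$ for all $(\mathcal V',\mathcal W')\in\mathcal{DRS}_{\mathbf v}$ with $d_P(\mathcal V,\mathcal V')+d_P(\mathcal W,\mathcal W')<\varepsilon$; a global minimizer minimizes FP over all of $\mathcal{DRS}_{\mathbf v}$. *)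

theory Defs
  imports "HOL-Analysis.Analysis" "Jordan_Normal_Form.Matrix"
begin

text \<open>Systems are represented as functions V :: nat => complex mat, of which only the
  entries V 0, ..., V (m-1) matter (0-based indexing of the m-tuple).\<close>

definition adj :: "complex mat \<Rightarrow> complex mat" where
  "adj A = transpose_mat (map_mat cnj A)"

definition mtrace :: "complex mat \<Rightarrow> complex" where
  "mtrace A = (\<Sum>i<dim_row A. A $$ (i, i))"

definition minv :: "complex mat \<Rightarrow> complex mat" where
  "minv A = (THE B. inverts_mat A B \<and> inverts_mat B A)"

definition frob :: "complex mat \<Rightarrow> real" where
  "frob A = sqrt (\<Sum>a<dim_row A. \<Sum>b<dim_col A. (cmod (A $$ (a, b)))\<^sup>2)"

definition is_system :: "nat \<Rightarrow> (nat \<Rightarrow> nat) \<Rightarrow> nat \<Rightarrow> (nat \<Rightarrow> complex mat) \<Rightarrow> bool" where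
  "is_system m k d V \<longleftrightarrow> (\<forall>i<m. V i \<in> carrier_mat (k i) d)"

definition RS_op :: "nat \<Rightarrow> nat \<Rightarrow> (nat \<Rightarrow> complex mat) \<Rightarrow> complex mat" where
  "RS_op m d V = mat d d (\<lambda>(a, b). \<Sum>i<m. (adj (V i) * V i) $$ (a, b))"

definition RS :: "nat \<Rightarrow> (nat \<Rightarrow> nat) \<Rightarrow> nat \<Rightarrow> (nat \<Rightarrow> complex mat) set" where
  "RS m k d = {V. is_system m k d V \<and> invertible_mat (RS_op m d V)}"

definition Pv :: "(nat \<Rightarrow> real) \<Rightarrow> nat \<Rightarrow> (nat \<Rightarrow> nat) \<Rightarrow> nat \<Rightarrow> (nat \<Rightarrow> complex mat) set" where
  "Pv v m k d = {V. V \<in> RS m k d \<and>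
      (\<forall>i<m. V i * adj (V i) = complex_of_real ((v i)\<^sup>2) \<cdot>\<^sub>m 1\<^sub>m (k i))}"

definition irreducible_sys :: "nat \<Rightarrow> nat \<Rightarrow> (nat \<Rightarrow> complex mat) \<Rightarrow> bool" where
  "irreducible_sys m d V \<longleftrightarrow>
     {A \<in> carrier_mat d d. \<forall>i<m. A * (adj (V i) * V i) = (adj (V i) * V i) * A}
       = {c \<cdot>\<^sub>m 1\<^sub>m d | c. True}"

definition can_dual :: "nat \<Rightarrow> nat \<Rightarrow> (nat \<Rightarrow> complex mat) \<Rightarrow> (nat \<Rightarrow> complex mat)" where
  "can_dual m d V = (\<lambda>i. V i * minv (RS_op m d V))"

definition cross_op :: "nat \<Rightarrow> nat \<Rightarrow> (nat \<Rightarrow> complex mat) \<Rightarrow> (nat \<Rightarrow> complex mat) \<Rightarrow> complex mat" where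
  "cross_op m d W V = mat d d (\<lambda>(a, b). \<Sum>i<m. (adj (W i) * V i) $$ (a, b))"

definition duals :: "nat \<Rightarrow> (nat \<Rightarrow> nat) \<Rightarrow> nat \<Rightarrow> (nat \<Rightarrow> complex mat) \<Rightarrow> (nat \<Rightarrow> complex mat) set" where
  "duals m k d V = {W. W \<in> RS m k d \<and> cross_op m d W V = 1\<^sub>m d}"

definition DRS :: "(nat \<Rightarrow> real) \<Rightarrow> nat \<Rightarrow> (nat \<Rightarrow> nat) \<Rightarrow> nat
    \<Rightarrow> ((nat \<Rightarrow> complex mat) \<times> (nat \<Rightarrow> complex mat)) set" where
  "DRS v m k d = {(V, W). V \<in> Pv v m k d \<and> W \<in> RS m k d \<and> W \<in> duals m k d V}"

text \<open>Joint frame potential tr S_V^2 + tr S_W^2; this trace is real (S_V, S_W Hermitian),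
  we take its real part to compare values in the real order.\<close>
definition FP :: "nat \<Rightarrow> nat \<Rightarrow> (nat \<Rightarrow> complex mat) \<Rightarrow> (nat \<Rightarrow> complex mat) \<Rightarrow> real" where
  "FP m d V W = Re (mtrace (RS_op m d V * RS_op m d V) + mtrace (RS_op m d W * RS_op m d W))"

definition dP :: "nat \<Rightarrow> (nat \<Rightarrow> complex mat) \<Rightarrow> (nat \<Rightarrow> complex mat) \<Rightarrow> real" where
  "dP m V W = sqrt (\<Sum>i<m. (frob (V i - W i))\<^sup>2)"

definition local_min_FP :: "(nat \<Rightarrow> real) \<Rightarrow> nat \<Rightarrow> (nat \<Rightarrow> nat) \<Rightarrow> nat
    \<Rightarrow> (nat \<Rightarrow> complex mat) \<Rightarrow> (nat \<Rightarrow> complex mat) \<Rightarrow> bool" where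
  "local_min_FP v m k d V W \<longleftrightarrow> (V, W) \<in> DRS v m k d \<and>
     (\<exists>\<epsilon>>0. \<forall>V' W'. (V', W') \<in> DRS v m k d \<and> dP m V V' + dP m W W' < \<epsilon>
        \<longrightarrow> FP m d V W \<le> FP m d V' W')"

definition global_min_FP :: "(nat \<Rightarrow> real) \<Rightarrow> nat \<Rightarrow> (nat \<Rightarrow> nat) \<Rightarrow> nat
    \<Rightarrow> (nat \<Rightarrow> complex mat) \<Rightarrow> (nat \<Rightarrow> complex mat) \<Rightarrow> bool" where
  "global_min_FP v m k d V W \<longleftrightarrow> (V, W) \<in> DRS v m k d \<and>
     (\<forall>V' W'. (V', W') \<in> DRS v m k d \<longrightarrow> FP m d V W \<le> FP m d V' W')"

end

theory Submission
  imports Defs "Jordan_Normal_Form.Determinant"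
begin


lemma adj_carrier[simp]: "A \<in> carrier_mat r c \<Longrightarrow> adj A \<in> carrier_mat c r"
  unfolding adj_def by auto

lemma adj_dims[simp]: "dim_row (adj A) = dim_col A" "dim_col (adj A) = dim_row A"
  unfolding adj_def by auto

lemma adj_index[simp]: "i < dim_col A \<Longrightarrow> j < dim_row A \<Longrightarrow> adj A $$ (i,j) = cnj (A $$ (j,i))"
  unfolding adj_def by auto

lemma adj_adj[simp]: "adj (adj A) = A"
  by (rule eq_matI) auto

lemma adj_mult: assumes "A \<in> carrier_mat r n" "B \<in> carrier_mat n c"
  shows "adj (A * B) = adj B * adj A"
  using assms by (intro eq_matI) (auto simp: scalar_prod_def sum_conjugate mult.commute)

lemma adj_add: assumes "A \<in> carrier_mat r c" "B \<in> carrier_mat r c"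
  shows "adj (A + B) = adj A + adj B"
  using assms by (intro eq_matI) auto

lemma adj_minus: assumes "A \<in> carrier_mat r c" "B \<in> carrier_mat r c"
  shows "adj (A - B) = adj A - adj B"
  using assms by (intro eq_matI) auto

lemma adj_smult: "adj (a \<cdot>\<^sub>m A) = cnj a \<cdot>\<^sub>m adj A"
  by (intro eq_matI) auto

lemma adj_one[simp]: "adj (1\<^sub>m n) = 1\<^sub>m n"
  by (intro eq_matI) auto

lemma adj_zero[simp]: "adj (0\<^sub>m r c) = 0\<^sub>m c r"
  by (intro eq_matI) auto


definition msum :: "nat \<Rightarrow> (nat \<Rightarrow> complex mat) \<Rightarrow> nat \<Rightarrow> complex mat" where
  "msum d A m = mat d d (\<lambda>(a,b). \<Sum>i<m. A i $$ (a,b))"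

lemma RS_op_msum: "RS_op m d V = msum d (\<lambda>i. adj (V i) * V i) m"
  unfolding RS_op_def msum_def by simp

lemma cross_op_msum: "cross_op m d W V = msum d (\<lambda>i. adj (W i) * V i) m"
  unfolding cross_op_def msum_def by simp

lemma msum_carrier[simp]: "msum d A m \<in> carrier_mat d d"
  unfolding msum_def by simp

lemma msum_dims[simp]: "dim_row (msum d A m) = d" "dim_col (msum d A m) = d"
  unfolding msum_def by simp_all

lemma msum_0: "msum d A 0 = 0\<^sub>m d d"
  unfolding msum_def by (intro eq_matI) auto

lemma msum_Suc: "A m \<in> carrier_mat d d \<Longrightarrow> msum d A (Suc m) = msum d A m + A m"
  unfolding msum_def by (intro eq_matI) auto

lemma msum_cong: "(\<And>i. i < m \<Longrightarrow> A i = B i) \<Longrightarrow> msum d A m = msum d B m"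
  unfolding msum_def by (intro eq_matI) auto

lemma msum_mult: assumes "B \<in> carrier_mat d d" "C \<in> carrier_mat d d"
  "\<And>i. i < m \<Longrightarrow> A i \<in> carrier_mat d d"
  shows "B * msum d A m * C = msum d (\<lambda>i. B * A i * C) m"
  using assms(3)
proof (induction m)
  case 0
  then show ?case using assms by (simp add: msum_0)
next
  case (Suc m)
  have Am: "A m \<in> carrier_mat d d" using Suc by auto
  have "B * msum d A (Suc m) * C = B * (msum d A m + A m) * C" using Am by (simp add: msum_Suc)
  also have "\<dots> = (B * msum d A m + B * A m) * C"
    using assms Am by (subst mult_add_distrib_mat[of B d d]) auto
  also have "\<dots> = B * msum d A m * C + B * A m * C"
    using assms Am by (subst add_mult_distrib_mat[of _ d d]) auto
  also have "\<dots> = msum d (\<lambda>i. B * A i * C) m + B * A m * C" using Suc by simp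
  also have "\<dots> = msum d (\<lambda>i. B * A i * C) (Suc m)"
    using assms Am by (subst msum_Suc) auto
  finally show ?case .
qed


lemma mtrace_msum: "(\<And>i. i < m \<Longrightarrow> A i \<in> carrier_mat d d) \<Longrightarrow> mtrace (msum d A m) = (\<Sum>i<m. mtrace (A i))"
  unfolding mtrace_def msum_def by (simp add: sum.swap[of _ "{..<m}"]) (intro sum.cong, auto)

lemma mtrace_add: "A \<in> carrier_mat n n \<Longrightarrow> B \<in> carrier_mat n n \<Longrightarrow> mtrace (A + B) = mtrace A + mtrace B"
  unfolding mtrace_def by (simp add: sum.distrib)

lemma mtrace_minus: "A \<in> carrier_mat n n \<Longrightarrow> B \<in> carrier_mat n n \<Longrightarrow> mtrace (A - B) = mtrace A - mtrace B"
  unfolding mtrace_def by (simp add: sum_subtractf)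

lemma mtrace_smult: "A \<in> carrier_mat n n \<Longrightarrow> mtrace (c \<cdot>\<^sub>m A) = c * mtrace A"
  unfolding mtrace_def by (simp add: sum_distrib_left)

lemma mtrace_one: "mtrace (1\<^sub>m n) = of_nat n"
  unfolding mtrace_def by simp

lemma mtrace_comm: assumes "A \<in> carrier_mat n k" "B \<in> carrier_mat k n"
  shows "mtrace (A * B) = mtrace (B * A)"
  using assms unfolding mtrace_def
  by (simp add: scalar_prod_def sum.swap[of _ "{..<n}"] mult.commute atLeast0LessThan)

lemma mtrace_adj_mult: assumes "A \<in> carrier_mat r c" "B \<in> carrier_mat r c"
  shows "mtrace (adj A * B) = (\<Sum>b<c. \<Sum>a<r. cnj (A $$ (a,b)) * B $$ (a,b))"
  using assms unfolding mtrace_def by (simp add: scalar_prod_def atLeast0LessThan)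

lemma cnj_mult_self: "cnj z * z = complex_of_real ((cmod z)\<^sup>2)"
  by (subst complex_norm_square) (simp add: mult.commute)

lemma mtrace_adj_self: assumes "A \<in> carrier_mat r c"
  shows "mtrace (adj A * A) = complex_of_real (\<Sum>b<c. \<Sum>a<r. (cmod (A $$ (a,b)))\<^sup>2)"
  using assms by (simp only: mtrace_adj_mult cnj_mult_self of_real_sum)

lemma mtrace_adj_self_nonneg: "A \<in> carrier_mat r c \<Longrightarrow> Re (mtrace (adj A * A)) \<ge> 0"
  by (simp add: mtrace_adj_self sum_nonneg)

lemma mtrace_adj_self_zero: assumes "A \<in> carrier_mat r c" "mtrace (adj A * A) = 0"
  shows "A = 0\<^sub>m r c"
proof -
  have "complex_of_real (\<Sum>b<c. \<Sum>a<r. (cmod (A $$ (a,b)))\<^sup>2) = 0" using assms mtrace_adj_self[OF assms(1)] by simp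
  hence "(\<Sum>b<c. \<Sum>a<r. (cmod (A $$ (a,b)))\<^sup>2) = 0" by (simp only: of_real_eq_0_iff)
  hence "\<forall>b<c. (\<Sum>a<r. (cmod (A $$ (a,b)))\<^sup>2) = 0"
    by (subst (asm) sum_nonneg_eq_0_iff) (auto intro: sum_nonneg)
  hence "\<forall>b<c. \<forall>a<r. (cmod (A $$ (a,b)))\<^sup>2 = 0"
    by (auto simp: sum_nonneg_eq_0_iff)
  thus ?thesis using assms by (intro eq_matI) auto
qed


lemma smult_smult_mat: "a \<cdot>\<^sub>m (b \<cdot>\<^sub>m A) = (a * b) \<cdot>\<^sub>m (A :: complex mat)"
  by (intro eq_matI) auto

lemma minv_unique: assumes A: "A \<in> carrier_mat n n" and B: "B \<in> carrier_mat n n" and AB: "A * B = 1\<^sub>m n"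
  shows "minv A = B" "B * A = 1\<^sub>m n"
proof -
  have BA: "B * A = 1\<^sub>m n" using mat_mult_left_right_inverse[OF A B AB] .
  show "B * A = 1\<^sub>m n" by (rule BA)
  show "minv A = B" unfolding minv_def
  proof (rule the_equality)
    show "inverts_mat A B \<and> inverts_mat B A" using A B AB BA unfolding inverts_mat_def by auto
  next
    fix B' assume h: "inverts_mat A B' \<and> inverts_mat B' A"
    hence 1: "A * B' = 1\<^sub>m n" "B' * A = 1\<^sub>m (dim_row B')" using A unfolding inverts_mat_def by auto
    have c: "dim_col B' = n" using arg_cong[OF 1(1), of dim_col] by simp
    have r: "dim_row B' = n" using arg_cong[OF 1(2), of dim_col] A by simp
    have B': "B' \<in> carrier_mat n n" using c r by auto
    have "B' = B' * (A * B)" using AB B' by simp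
    also have "\<dots> = (B' * A) * B" using A B B' by simp
    also have "\<dots> = B" using 1(2) r B by simp
    finally show "B' = B" .
  qed
qed

lemma invertible_det: assumes A: "(A::complex mat) \<in> carrier_mat n n" and "invertible_mat A"
  shows "Determinant.det A \<noteq> 0"
proof -
  obtain B where h: "inverts_mat A B" "inverts_mat B A" using assms unfolding invertible_mat_def by auto
  hence 1: "A * B = 1\<^sub>m n" "B * A = 1\<^sub>m (dim_row B)" using A unfolding inverts_mat_def by auto
  have c: "dim_col B = n" using arg_cong[OF 1(1), of dim_col] by simp
  have r: "dim_row B = n" using arg_cong[OF 1(2), of dim_col] A by simp
  have B: "B \<in> carrier_mat n n" using c r by auto
  have "Determinant.det A * Determinant.det B = 1" using det_mult[OF A B] 1(1) by simp
  thus ?thesis by auto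
qed

definition inv2 :: "complex mat \<Rightarrow> complex mat" where
  "inv2 A = (1 / Determinant.det A) \<cdot>\<^sub>m adj_mat A"

lemma smult_one_mat1[simp]: "(1::complex) \<cdot>\<^sub>m A = A"
  by (intro eq_matI) auto

lemma inv2_carrier[simp]: assumes A: "A \<in> carrier_mat n n" shows "inv2 A \<in> carrier_mat n n"
  unfolding inv2_def using adj_mat(1)[OF A] by simp

lemma inv2: assumes A: "A \<in> carrier_mat n n" and d: "Determinant.det A \<noteq> 0"
  shows "A * inv2 A = 1\<^sub>m n" "inv2 A * A = 1\<^sub>m n" "minv A = inv2 A"
proof -
  show 1: "A * inv2 A = 1\<^sub>m n" unfolding inv2_def
    using adj_mat[OF A] A d by (simp add: mult_smult_distrib[of _ n n _ n] smult_smult_mat)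
  show "inv2 A * A = 1\<^sub>m n" "minv A = inv2 A" using minv_unique[OF A inv2_carrier[OF A] 1] by auto
qed

lemma det_invertible: assumes A: "(A::complex mat) \<in> carrier_mat n n" and d: "Determinant.det A \<noteq> 0"
  shows "invertible_mat A"
proof -
  have r: "dim_row (inv2 A) = n" using inv2_carrier[OF A] by auto
  show ?thesis using inv2[OF A d] A r unfolding invertible_mat_def inverts_mat_def
    by (intro conjI exI[of _ "inv2 A"]) auto
qed

lemma invertible_iff_det: "(A::complex mat) \<in> carrier_mat n n \<Longrightarrow> invertible_mat A \<longleftrightarrow> Determinant.det A \<noteq> 0"
  using det_invertible invertible_det by blast

lemma inv2_one[simp]: "inv2 (1\<^sub>m n) = 1\<^sub>m n"
proof -
  have "1\<^sub>m n * inv2 (1\<^sub>m n) = 1\<^sub>m n" using inv2(1)[of "1\<^sub>m n" n] by simp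
  moreover have c: "inv2 (1\<^sub>m n) \<in> carrier_mat n n" by simp
  ultimately show ?thesis by (metis left_mult_one_mat)
qed

lemma inv2_adj: assumes A: "A \<in> carrier_mat n n" and d: "Determinant.det A \<noteq> 0" and h: "adj A = A"
  shows "adj (inv2 A) = inv2 A"
proof -
  have "adj (A * inv2 A) = 1\<^sub>m n" using inv2(1)[OF A d] by simp
  hence "adj (inv2 A) * A = 1\<^sub>m n" using adj_mult[OF A inv2_carrier[OF A]] h by simp
  hence "A * adj (inv2 A) = 1\<^sub>m n" using mat_mult_left_right_inverse[of "adj (inv2 A)" n A] A by auto
  from minv_unique(1)[OF A _ this] inv2(3)[OF A d] show ?thesis using A by auto
qed


lemma assoc4: assumes "A \<in> carrier_mat a b" "B \<in> carrier_mat b e" "C \<in> carrier_mat e f" "(D::'x::comm_ring_1 mat) \<in> carrier_mat f g"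
  shows "A * (B * C) * D = A * B * (C * D)"
proof -
  have "A * (B * C) * D = A * ((B * C) * D)" using assms by (meson assoc_mult_mat mult_carrier_mat)
  also have "\<dots> = A * (B * (C * D))" using assms by simp
  also have "\<dots> = A * B * (C * D)" using assoc_mult_mat[OF assms(1,2) mult_carrier_mat[OF assms(3,4)]] by simp
  finally show ?thesis .
qed

lemma RS_op_carrier[simp]: "RS_op m d V \<in> carrier_mat d d"
  unfolding RS_op_def by simp

lemma msum_adj: assumes "\<And>i. i < m \<Longrightarrow> A i \<in> carrier_mat d d"
  shows "adj (msum d A m) = msum d (\<lambda>i. adj (A i)) m"
proof (intro eq_matI)
  fix a b assume ab: "a < dim_row (msum d (\<lambda>i. adj (A i)) m)" "b < dim_col (msum d (\<lambda>i. adj (A i)) m)"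
  have "\<And>i. i \<in> {..<m} \<Longrightarrow> cnj (A i $$ (b, a)) = adj (A i) $$ (a, b)"
    using assms ab by (subst adj_index) auto
  thus "adj (msum d A m) $$ (a, b) = msum d (\<lambda>i. adj (A i)) m $$ (a, b)"
    using ab unfolding msum_def by (auto simp: sum_conjugate)
qed auto

lemma RS_op_herm: assumes "is_system m k d V" shows "adj (RS_op m d V) = RS_op m d V"
proof -
  have c: "\<And>i. i < m \<Longrightarrow> adj (V i) * V i \<in> carrier_mat d d" using assms unfolding is_system_def
    by (metis adj_carrier mult_carrier_mat)
  have "adj (RS_op m d V) = msum d (\<lambda>i. adj (adj (V i) * V i)) m" unfolding RS_op_msum using msum_adj[OF c] .
  also have "\<dots> = RS_op m d V" unfolding RS_op_msum using assms unfolding is_system_def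
    by (intro msum_cong) (metis adj_adj adj_carrier adj_mult)
  finally show ?thesis .
qed

lemma RS_op_mult: assumes "is_system m k d V" "M \<in> carrier_mat d d"
  shows "RS_op m d (\<lambda>i. V i * M) = adj M * RS_op m d V * M"
proof -
  have c: "\<And>i. i < m \<Longrightarrow> adj (V i) * V i \<in> carrier_mat d d" using assms unfolding is_system_def
    by (metis adj_carrier mult_carrier_mat)
  have "adj M * RS_op m d V * M = msum d (\<lambda>i. adj M * (adj (V i) * V i) * M) m"
    unfolding RS_op_msum using assms c by (intro msum_mult) auto
  also have "\<dots> = RS_op m d (\<lambda>i. V i * M)" unfolding RS_op_msum
  proof (intro msum_cong)
    fix i assume i: "i < m"
    have Vi: "V i \<in> carrier_mat (k i) d" using assms i unfolding is_system_def by auto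
    have aV: "adj (V i) \<in> carrier_mat d (k i)" "adj M \<in> carrier_mat d d" using Vi assms(2) by auto
    show "adj M * (adj (V i) * V i) * M = adj (V i * M) * (V i * M)"
      unfolding adj_mult[OF Vi assms(2)] using assoc4[OF aV(2) aV(1) Vi assms(2)] .
  qed
  finally show ?thesis by simp
qed

lemma cross_op_mult: assumes "is_system m k d V" "M \<in> carrier_mat d d"
  shows "cross_op m d (\<lambda>i. V i * M) V = adj M * RS_op m d V"
proof -
  have c: "\<And>i. i < m \<Longrightarrow> adj (V i) * V i \<in> carrier_mat d d" using assms unfolding is_system_def
    by (metis adj_carrier mult_carrier_mat)
  have "adj M * RS_op m d V * 1\<^sub>m d = msum d (\<lambda>i. adj M * (adj (V i) * V i) * 1\<^sub>m d) m"
    unfolding RS_op_msum using assms c by (intro msum_mult) auto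
  also have "\<dots> = cross_op m d (\<lambda>i. V i * M) V" unfolding cross_op_msum
  proof (intro msum_cong)
    fix i assume i: "i < m"
    have Vi: "V i \<in> carrier_mat (k i) d" using assms i unfolding is_system_def by auto
    have aV: "adj (V i) \<in> carrier_mat d (k i)" "adj M \<in> carrier_mat d d" using Vi assms(2) by auto
    show "adj M * (adj (V i) * V i) * 1\<^sub>m d = adj (V i * M) * V i"
      unfolding adj_mult[OF Vi assms(2)] using aV Vi by (simp add: assoc_mult_mat[OF aV(2) aV(1) Vi])
  qed
  finally show ?thesis using assms(2) by (metis RS_op_carrier adj_carrier mult_carrier_mat right_mult_one_mat)
qed

lemma Pv_system: "V \<in> Pv v m k d \<Longrightarrow> is_system m k d V"
  unfolding Pv_def RS_def by auto

lemma Pv_det: "V \<in> Pv v m k d \<Longrightarrow> Determinant.det (RS_op m d V) \<noteq> 0"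
  unfolding Pv_def RS_def using invertible_det[OF RS_op_carrier] by auto

lemma can_dual_facts: assumes V: "V \<in> Pv v m k d"
  defines "S \<equiv> RS_op m d V"
  shows "minv S = inv2 S" "S * inv2 S = 1\<^sub>m d" "inv2 S * S = 1\<^sub>m d" "adj (inv2 S) = inv2 S"
    "RS_op m d (can_dual m d V) = inv2 S" "cross_op m d (can_dual m d V) V = 1\<^sub>m d"
    "can_dual m d V \<in> RS m k d" "(V, can_dual m d V) \<in> DRS v m k d"
proof -
  have sys: "is_system m k d V" using Pv_system[OF V] .
  have Sc: "S \<in> carrier_mat d d" unfolding S_def by simp
  have dS: "Determinant.det S \<noteq> 0" unfolding S_def using Pv_det[OF V] .
  note i = inv2[OF Sc dS]
  show "minv S = inv2 S" "S * inv2 S = 1\<^sub>m d" "inv2 S * S = 1\<^sub>m d" using i by auto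
  have hS: "adj S = S" unfolding S_def using RS_op_herm[OF sys] .
  show hT: "adj (inv2 S) = inv2 S" using inv2_adj[OF Sc dS hS] .
  have Tc: "inv2 S \<in> carrier_mat d d" using Sc by simp
  have cd: "can_dual m d V = (\<lambda>i. V i * inv2 S)" unfolding can_dual_def S_def[symmetric] i(3) ..
  show R: "RS_op m d (can_dual m d V) = inv2 S" unfolding cd RS_op_mult[OF sys Tc] hT S_def[symmetric]
    using i Tc Sc by (simp add: left_mult_one_mat[OF Tc])
  show C: "cross_op m d (can_dual m d V) V = 1\<^sub>m d" unfolding cd cross_op_mult[OF sys Tc] hT S_def[symmetric]
    using i by simp
  have "Determinant.det (inv2 S) \<noteq> 0" using det_mult[OF Sc Tc] i(1) by auto
  hence "invertible_mat (inv2 S)" using det_invertible[OF Tc] by auto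
  moreover have "is_system m k d (can_dual m d V)" unfolding cd using sys Tc unfolding is_system_def by auto
  ultimately show RS: "can_dual m d V \<in> RS m k d" unfolding RS_def using R by auto
  show "(V, can_dual m d V) \<in> DRS v m k d" unfolding DRS_def duals_def using V RS C by auto
qed


lemma trace_RS_op_real: assumes "is_system m k d W"
  shows "mtrace (RS_op m d W) = complex_of_real (\<Sum>i<m. \<Sum>b<d. \<Sum>a<k i. (cmod (W i $$ (a,b)))\<^sup>2)"
proof -
  have c: "\<And>i. i < m \<Longrightarrow> W i \<in> carrier_mat (k i) d" using assms unfolding is_system_def by auto
  have "mtrace (RS_op m d W) = (\<Sum>i<m. mtrace (adj (W i) * W i))"
    unfolding RS_op_msum by (rule mtrace_msum) (metis c adj_carrier mult_carrier_mat)
  also have "\<dots> = (\<Sum>i<m. complex_of_real (\<Sum>b<d. \<Sum>a<k i. (cmod (W i $$ (a,b)))\<^sup>2))"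
    by (intro sum.cong refl mtrace_adj_self c) simp
  finally show ?thesis by (simp add: of_real_sum)
qed

lemma trace_RS_op_Pv: assumes "V \<in> Pv v m k d"
  shows "mtrace (RS_op m d V) = complex_of_real (\<Sum>i<m. (v i)\<^sup>2 * real (k i))"
proof -
  have c: "\<And>i. i < m \<Longrightarrow> V i \<in> carrier_mat (k i) d" using Pv_system[OF assms] unfolding is_system_def by auto
  have e: "\<And>i. i < m \<Longrightarrow> V i * adj (V i) = complex_of_real ((v i)\<^sup>2) \<cdot>\<^sub>m 1\<^sub>m (k i)"
    using assms unfolding Pv_def by auto
  have "mtrace (RS_op m d V) = (\<Sum>i<m. mtrace (adj (V i) * V i))"
    unfolding RS_op_msum by (rule mtrace_msum) (metis c adj_carrier mult_carrier_mat)
  also have "\<dots> = (\<Sum>i<m. complex_of_real ((v i)\<^sup>2 * real (k i)))"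
  proof (intro sum.cong refl)
    fix i assume "i \<in> {..<m}" hence i: "i < m" by simp
    have "mtrace (adj (V i) * V i) = mtrace (V i * adj (V i))"
      using c[OF i] by (intro mtrace_comm) auto
    also have "\<dots> = complex_of_real ((v i)\<^sup>2) * of_nat (k i)"
      unfolding e[OF i] by (simp add: mtrace_smult[of _ "k i"] mtrace_one)
    finally show "mtrace (adj (V i) * V i) = complex_of_real ((v i)\<^sup>2 * real (k i))" by simp
  qed
  finally show ?thesis by (simp add: of_real_sum)
qed

lemma herm_bound: assumes A: "A \<in> carrier_mat n n" and h: "adj A = A"
  shows "Re (mtrace (A * A)) \<ge> 2 * s * Re (mtrace A) - s\<^sup>2 * real n"
proof -
  have "mtrace (A * A) = complex_of_real (\<Sum>b<n. \<Sum>a<n. (cmod (A $$ (a,b)))\<^sup>2)"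
    using mtrace_adj_self[OF A] h by simp
  hence "Re (mtrace (A * A)) = (\<Sum>b<n. \<Sum>a<n. (cmod (A $$ (a,b)))\<^sup>2)" by simp
  also have "\<dots> \<ge> (\<Sum>b<n. (cmod (A $$ (b,b)))\<^sup>2)"
    by (intro sum_mono member_le_sum) auto
  also have "(\<Sum>b<n. (cmod (A $$ (b,b)))\<^sup>2) \<ge> (\<Sum>b<n. 2 * s * Re (A $$ (b,b)) - s\<^sup>2)"
  proof (intro sum_mono)
    fix b
    have "\<bar>Re (A $$ (b,b))\<bar> \<le> cmod (A $$ (b,b))" by (rule abs_Re_le_cmod)
    hence "(Re (A $$ (b,b)))\<^sup>2 \<le> (cmod (A $$ (b,b)))\<^sup>2"
      by (metis abs_ge_zero power2_abs power_mono)
    moreover have "0 \<le> (Re (A $$ (b,b)) - s)\<^sup>2" by simp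
    ultimately show "2 * s * Re (A $$ (b,b)) - s\<^sup>2 \<le> (cmod (A $$ (b,b)))\<^sup>2"
      by (simp add: power2_diff algebra_simps)
  qed
  also have "(\<Sum>b<n. 2 * s * Re (A $$ (b,b)) - s\<^sup>2) = 2 * s * Re (mtrace A) - s\<^sup>2 * real n"
    using A unfolding mtrace_def by (simp add: sum_subtractf sum_distrib_left)
  finally show ?thesis by simp
qed


lemma cmod_diff_sq: "(cmod (f - complex_of_real s * g))\<^sup>2 = (cmod f)\<^sup>2 - 2 * s * Re (cnj f * g) + s\<^sup>2 * (cmod g)\<^sup>2"
  by (simp only: cmod_power2) (simp add: power2_diff algebra_simps power2_eq_square)

lemma triple_sum_lin: "(\<Sum>i<m. \<Sum>b<d. \<Sum>a<k i. X i a b - c1 * Y i a b + c2 * Z i a b) =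
   (\<Sum>i<m. \<Sum>b<d. \<Sum>a<k i. X i a b) - c1 * (\<Sum>i<m. \<Sum>b<d. \<Sum>a<k i. Y i a b)
     + c2 * (\<Sum>i<m. \<Sum>b<d. \<Sum>a<(k i::nat). (Z i a b::real))"
  by (simp add: sum.distrib sum_subtractf sum_distrib_left)

lemma trace_cross_op: assumes "is_system m k d W" "is_system m k d V"
  shows "mtrace (cross_op m d W V) = (\<Sum>i<m. \<Sum>b<d. \<Sum>a<k i. cnj (W i $$ (a,b)) * V i $$ (a,b))"
proof -
  have c: "\<And>i. i < m \<Longrightarrow> W i \<in> carrier_mat (k i) d" "\<And>i. i < m \<Longrightarrow> V i \<in> carrier_mat (k i) d"
    using assms unfolding is_system_def by auto
  have "mtrace (cross_op m d W V) = (\<Sum>i<m. mtrace (adj (W i) * V i))"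
    unfolding cross_op_msum by (rule mtrace_msum) (metis c adj_carrier mult_carrier_mat)
  also have "\<dots> = (\<Sum>i<m. \<Sum>b<d. \<Sum>a<k i. cnj (W i $$ (a,b)) * V i $$ (a,b))"
    by (intro sum.cong refl mtrace_adj_mult c) simp_all
  finally show ?thesis .
qed

lemma dual_bound: assumes V: "V \<in> Pv v m k d" and W: "W \<in> RS m k d" and C: "cross_op m d W V = 1\<^sub>m d"
  and tau: "\<tau> = (\<Sum>i<m. (v i)\<^sup>2 * real (k i))" "\<tau> > 0"
  shows "Re (mtrace (RS_op m d W)) \<ge> (real d)\<^sup>2 / \<tau>"
proof -
  define s where "s = real d / \<tau>"
  have sW: "is_system m k d W" using W unfolding RS_def by auto
  have sV: "is_system m k d V" using Pv_system[OF V] .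
  define F where "F i a b = W i $$ (a,b)" for i a b
  define G where "G i a b = V i $$ (a,b)" for i a b
  have tW: "Re (mtrace (RS_op m d W)) = (\<Sum>i<m. \<Sum>b<d. \<Sum>a<k i. (cmod (F i a b))\<^sup>2)"
    using trace_RS_op_real[OF sW] unfolding F_def by simp
  have tV: "\<tau> = (\<Sum>i<m. \<Sum>b<d. \<Sum>a<k i. (cmod (G i a b))\<^sup>2)"
  proof -
    have "complex_of_real \<tau> = complex_of_real (\<Sum>i<m. \<Sum>b<d. \<Sum>a<k i. (cmod (G i a b))\<^sup>2)"
      using trace_RS_op_real[OF sV] trace_RS_op_Pv[OF V] unfolding G_def tau(1) by metis
    thus ?thesis by (simp only: of_real_eq_iff)
  qed
  have tC: "real d = (\<Sum>i<m. \<Sum>b<d. \<Sum>a<k i. Re (cnj (F i a b) * G i a b))"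
  proof -
    have "mtrace (cross_op m d W V) = of_nat d" using C by (simp add: mtrace_one)
    hence "Re (mtrace (cross_op m d W V)) = real d" by simp
    thus ?thesis using trace_cross_op[OF sW sV] unfolding F_def G_def by simp
  qed
  have "0 \<le> (\<Sum>i<m. \<Sum>b<d. \<Sum>a<k i. (cmod (F i a b - complex_of_real s * G i a b))\<^sup>2)"
    by (intro sum_nonneg) auto
  also have "\<dots> = (\<Sum>i<m. \<Sum>b<d. \<Sum>a<k i. (cmod (F i a b))\<^sup>2 - 2 * s * Re (cnj (F i a b) * G i a b) + s\<^sup>2 * (cmod (G i a b))\<^sup>2)"
    by (simp only: cmod_diff_sq)
  also have "\<dots> = Re (mtrace (RS_op m d W)) - 2 * s * real d + s\<^sup>2 * \<tau>"
    unfolding tW tV tC by (rule triple_sum_lin)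
  finally have "Re (mtrace (RS_op m d W)) \<ge> 2 * s * real d - s\<^sup>2 * \<tau>" by simp
  moreover have "2 * s * real d - s\<^sup>2 * \<tau> = (real d)\<^sup>2 / \<tau>"
    unfolding s_def using tau(2) by (simp add: field_simps power2_eq_square)
  ultimately show ?thesis by simp
qed


lemma scal_mult: "(a \<cdot>\<^sub>m 1\<^sub>m n) * (b \<cdot>\<^sub>m 1\<^sub>m n) = ((a * b)::complex) \<cdot>\<^sub>m 1\<^sub>m n"
proof -
  have "(a \<cdot>\<^sub>m 1\<^sub>m n) * (b \<cdot>\<^sub>m 1\<^sub>m n) = a \<cdot>\<^sub>m (1\<^sub>m n * (b \<cdot>\<^sub>m 1\<^sub>m n))"
    by (rule mult_smult_assoc_mat) auto
  also have "\<dots> = a \<cdot>\<^sub>m (b \<cdot>\<^sub>m 1\<^sub>m n)" by simp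
  finally show ?thesis by (simp add: smult_smult_mat)
qed

lemma tight_global: assumes V: "V \<in> Pv v m k d" and d: "d \<ge> 1"
  and tau: "\<tau> = (\<Sum>i<m. (v i)\<^sup>2 * real (k i))" "\<tau> > 0"
  and S: "RS_op m d V = complex_of_real (\<tau> / real d) \<cdot>\<^sub>m 1\<^sub>m d"
  shows "global_min_FP v m k d V (can_dual m d V)"
proof -
  note cd = can_dual_facts[OF V]
  define S where "S = RS_op m d V"
  define T where "T = complex_of_real (real d / \<tau>) \<cdot>\<^sub>m 1\<^sub>m d"
  have ST: "S * T = 1\<^sub>m d" unfolding S_def S T_def scal_mult using tau(2) d
    by (simp flip: of_real_mult)
  have Tc: "T \<in> carrier_mat d d" unfolding T_def by simp
  have T: "inv2 S = T" using minv_unique(1)[OF _ Tc ST] cd(1) unfolding S_def by simp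
  have val: "FP m d V (can_dual m d V) = \<tau>\<^sup>2 / real d + (real d)^3 / \<tau>\<^sup>2"
  proof -
    have "FP m d V (can_dual m d V) = Re (mtrace (S * S) + mtrace (T * T))"
      unfolding FP_def cd(5) using T unfolding S_def by simp
    also have "S * S = complex_of_real ((\<tau> / real d) * (\<tau> / real d)) \<cdot>\<^sub>m 1\<^sub>m d"
      unfolding S_def S scal_mult by simp
    also have "T * T = complex_of_real ((real d / \<tau>) * (real d / \<tau>)) \<cdot>\<^sub>m 1\<^sub>m d"
      unfolding T_def scal_mult by simp
    finally show ?thesis using d tau(2) by (simp add: mtrace_smult[of _ d] mtrace_one field_simps power2_eq_square power3_eq_cube)
  qed
  show ?thesis unfolding global_min_FP_def
  proof (intro conjI cd(8) allI impI)
    fix V' W' assume h: "(V', W') \<in> DRS v m k d"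
    hence V': "V' \<in> Pv v m k d" and W': "W' \<in> RS m k d" and C: "cross_op m d W' V' = 1\<^sub>m d"
      unfolding DRS_def duals_def by auto
    have sW: "is_system m k d W'" using W' unfolding RS_def by auto
    have b1: "Re (mtrace (RS_op m d V' * RS_op m d V')) \<ge> 2 * (\<tau> / real d) * Re (mtrace (RS_op m d V')) - (\<tau> / real d)\<^sup>2 * real d"
      by (rule herm_bound[OF RS_op_carrier RS_op_herm[OF Pv_system[OF V']]])
    have tr1: "Re (mtrace (RS_op m d V')) = \<tau>" using trace_RS_op_Pv[OF V'] tau(1) by simp
    have b2: "Re (mtrace (RS_op m d W' * RS_op m d W')) \<ge> 2 * (real d / \<tau>) * Re (mtrace (RS_op m d W')) - (real d / \<tau>)\<^sup>2 * real d"
      by (rule herm_bound[OF RS_op_carrier RS_op_herm[OF sW]])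
    have tr2: "Re (mtrace (RS_op m d W')) \<ge> (real d)\<^sup>2 / \<tau>" by (rule dual_bound[OF V' W' C tau])
    define t where "t = Re (mtrace (RS_op m d W'))"
    define X where "X = Re (mtrace (RS_op m d W' * RS_op m d W'))"
    have e1: "\<tau>\<^sup>2 * X \<ge> 2 * real d * \<tau> * t - (real d)^3"
    proof -
      have "\<tau>\<^sup>2 * X \<ge> \<tau>\<^sup>2 * (2 * (real d / \<tau>) * t - (real d / \<tau>)\<^sup>2 * real d)"
        using b2 unfolding t_def X_def by (intro mult_left_mono) auto
      moreover have "\<tau>\<^sup>2 * (2 * (real d / \<tau>) * t - (real d / \<tau>)\<^sup>2 * real d) = 2 * real d * \<tau> * t - (real d)^3"
        using tau(2) by (simp add: field_simps power2_eq_square power3_eq_cube)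
      ultimately show ?thesis by simp
    qed
    have e2: "real d * \<tau> * t \<ge> (real d)^3"
    proof -
      have "real d * \<tau> * t \<ge> real d * \<tau> * ((real d)\<^sup>2 / \<tau>)"
        using tr2 tau(2) unfolding t_def by (intro mult_left_mono) auto
      thus ?thesis using tau(2) by (simp add: field_simps power2_eq_square power3_eq_cube)
    qed
    have "\<tau>\<^sup>2 * X \<ge> (real d)^3" using e1 e2 by linarith
    hence b2': "Re (mtrace (RS_op m d W' * RS_op m d W')) \<ge> (real d)^3 / \<tau>\<^sup>2"
      unfolding X_def using tau(2) by (simp add: field_simps)
    have b1': "Re (mtrace (RS_op m d V' * RS_op m d V')) \<ge> \<tau>\<^sup>2 / real d"
      using b1 tr1 tau(2) d by (simp add: field_simps power2_eq_square)
    show "FP m d V (can_dual m d V) \<le> FP m d V' W'" unfolding val unfolding FP_def using b1' b2' by simp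
  qed
qed


definition mder :: "(real \<Rightarrow> complex mat) \<Rightarrow> complex mat \<Rightarrow> real \<Rightarrow> nat \<Rightarrow> nat \<Rightarrow> bool" where
  "mder A D x r c \<longleftrightarrow> (\<forall>t. A t \<in> carrier_mat r c) \<and> D \<in> carrier_mat r c \<and>
     (\<forall>a<r. \<forall>b<c. ((\<lambda>t. A t $$ (a,b)) has_vector_derivative D $$ (a,b)) (at x))"

definition vdiff :: "(real \<Rightarrow> complex) \<Rightarrow> real \<Rightarrow> bool" where
  "vdiff f x \<longleftrightarrow> (\<exists>D. (f has_vector_derivative D) (at x))"

lemma mderD: "mder A D x r c \<Longrightarrow> A t \<in> carrier_mat r c"
  "mder A D x r c \<Longrightarrow> D \<in> carrier_mat r c"
  "mder A D x r c \<Longrightarrow> a < r \<Longrightarrow> b < c \<Longrightarrow> ((\<lambda>t. A t $$ (a,b)) has_vector_derivative D $$ (a,b)) (at x)"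
  unfolding mder_def by auto

lemma mder_const: "A \<in> carrier_mat r c \<Longrightarrow> mder (\<lambda>t. A) (0\<^sub>m r c) x r c"
  unfolding mder_def by (auto intro: has_vector_derivative_const)

lemma mderI: assumes "\<And>t. A t \<in> carrier_mat r c" "D \<in> carrier_mat r c"
  "\<And>a b. a < r \<Longrightarrow> b < c \<Longrightarrow> ((\<lambda>t. A t $$ (a,b)) has_vector_derivative D $$ (a,b)) (at x)"
  shows "mder A D x r c" using assms unfolding mder_def by auto

lemma hvd_cong: "(\<And>t. f t = g t) \<Longrightarrow> D = E \<Longrightarrow> (g has_vector_derivative E) F \<Longrightarrow> (f has_vector_derivative D) F"
  by (metis ext)

lemma mder_add: assumes A: "mder A D x r c" and B: "mder B E x r c"
  shows "mder (\<lambda>t. A t + B t) (D + E) x r c"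
proof (rule mderI)
  fix a b assume ab: "a < r" "b < c"
  show "((\<lambda>t. (A t + B t) $$ (a,b)) has_vector_derivative (D + E) $$ (a,b)) (at x)"
  proof (rule hvd_cong[OF _ _ has_vector_derivative_add[OF mderD(3)[OF A ab] mderD(3)[OF B ab]]])
    fix t show "(A t + B t) $$ (a,b) = A t $$ (a,b) + B t $$ (a,b)" using ab mderD(1)[OF A, of t] mderD(1)[OF B, of t] by auto
  qed (use ab mderD(2)[OF A] mderD(2)[OF B] in auto)
qed (use mderD(1,2)[OF A] mderD(1,2)[OF B] in auto)

lemma mder_minus: assumes A: "mder A D x r c" and B: "mder B E x r c"
  shows "mder (\<lambda>t. A t - B t) (D - E) x r c"
proof (rule mderI)
  fix a b assume ab: "a < r" "b < c"
  show "((\<lambda>t. (A t - B t) $$ (a,b)) has_vector_derivative (D - E) $$ (a,b)) (at x)"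
  proof (rule hvd_cong[OF _ _ has_vector_derivative_diff[OF mderD(3)[OF A ab] mderD(3)[OF B ab]]])
    fix t show "(A t - B t) $$ (a,b) = A t $$ (a,b) - B t $$ (a,b)" using ab mderD(1)[OF A, of t] mderD(1)[OF B, of t] by auto
  qed (use ab mderD(2)[OF A] mderD(2)[OF B] in auto)
qed (use mderD(1,2)[OF A] mderD(1,2)[OF B] in \<open>auto intro!: minus_carrier_mat\<close>)

lemma mder_smult: assumes A: "mder A D x r c"
  shows "mder (\<lambda>t. a \<cdot>\<^sub>m A t) (a \<cdot>\<^sub>m D) x r c"
proof (rule mderI)
  fix i j assume ab: "i < r" "j < c"
  show "((\<lambda>t. (a \<cdot>\<^sub>m A t) $$ (i,j)) has_vector_derivative (a \<cdot>\<^sub>m D) $$ (i,j)) (at x)"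
  proof (rule hvd_cong[OF _ _ has_vector_derivative_mult_right[OF mderD(3)[OF A ab]]])
    fix t show "(a \<cdot>\<^sub>m A t) $$ (i,j) = a * A t $$ (i,j)" using ab mderD(1)[OF A, of t] by auto
  qed (use ab mderD(2)[OF A] in auto)
qed (use mderD(1,2)[OF A] in auto)

lemma mder_mult: assumes A: "mder A D x r n" and B: "mder B E x n c"
  shows "mder (\<lambda>t. A t * B t) (A x * E + D * B x) x r c"
  unfolding mder_def
proof (intro conjI allI impI)
  show "A t * B t \<in> carrier_mat r c" for t using mderD(1)[OF A, of t] mderD(1)[OF B, of t] by auto
  show "A x * E + D * B x \<in> carrier_mat r c" using mderD(1)[OF A] mderD(1)[OF B] mderD(2)[OF A] mderD(2)[OF B] by auto
  fix a b assume ab: "a < r" "b < c"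
  have Ac: "\<And>t. A t \<in> carrier_mat r n" "D \<in> carrier_mat r n" using mderD[OF A] by auto
  have Bc: "\<And>t. B t \<in> carrier_mat n c" "E \<in> carrier_mat n c" using mderD[OF B] by auto
  have e: "(\<lambda>t. (A t * B t) $$ (a,b)) = (\<lambda>t. \<Sum>i\<in>{0..<n}. A t $$ (a,i) * B t $$ (i,b))"
  proof (rule ext)
    fix t show "(A t * B t) $$ (a,b) = (\<Sum>i\<in>{0..<n}. A t $$ (a,i) * B t $$ (i,b))"
      using Ac(1)[of t] Bc(1)[of t] ab by (auto simp: scalar_prod_def)
  qed
  have "((\<lambda>t. \<Sum>i\<in>{0..<n}. A t $$ (a,i) * B t $$ (i,b)) has_vector_derivative
        (\<Sum>i\<in>{0..<n}. A x $$ (a,i) * E $$ (i,b) + D $$ (a,i) * B x $$ (i,b))) (at x)"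
    by (intro has_vector_derivative_sum has_vector_derivative_mult mderD(3)[OF A] mderD(3)[OF B])
      (insert ab, auto)
  also have "(\<Sum>i\<in>{0..<n}. A x $$ (a,i) * E $$ (i,b) + D $$ (a,i) * B x $$ (i,b)) = (A x * E + D * B x) $$ (a,b)"
    using Ac(1)[of x] Ac(2) Bc(1)[of x] Bc(2) ab by (auto simp: scalar_prod_def sum.distrib)
  finally show "((\<lambda>t. (A t * B t) $$ (a,b)) has_vector_derivative (A x * E + D * B x) $$ (a,b)) (at x)"
    unfolding e .
qed

lemma has_vector_derivative_cnj: "(f has_vector_derivative f') F \<Longrightarrow> ((\<lambda>t. cnj (f t)) has_vector_derivative cnj f') F"
  using bounded_linear.has_vector_derivative[OF bounded_linear_cnj] .

lemma has_vector_derivative_Re: "(f has_vector_derivative f') F \<Longrightarrow> ((\<lambda>t. Re (f t)) has_vector_derivative Re f') F"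
  using bounded_linear.has_vector_derivative[OF bounded_linear_Re] .

lemma mder_adj: assumes A: "mder A D x r c"
  shows "mder (\<lambda>t. adj (A t)) (adj D) x c r"
proof (rule mderI)
  fix i j assume ab: "i < c" "j < r"
  show "((\<lambda>t. adj (A t) $$ (i,j)) has_vector_derivative adj D $$ (i,j)) (at x)"
  proof (rule hvd_cong[OF _ _ has_vector_derivative_cnj[OF mderD(3)[OF A ab(2,1)]]])
    fix t show "adj (A t) $$ (i,j) = cnj (A t $$ (j,i))" using ab mderD(1)[OF A, of t] by auto
  qed (use ab mderD(2)[OF A] in auto)
qed (use mderD(1,2)[OF A] in auto)

lemma mder_trace: assumes "mder A D x n n"
  shows "((\<lambda>t. Re (mtrace (A t))) has_real_derivative Re (mtrace D)) (at x)"
proof -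
  have e: "(\<lambda>t. Re (mtrace (A t))) = (\<lambda>t. Re (\<Sum>a<n. A t $$ (a,a)))"
  proof (rule ext)
    fix t show "Re (mtrace (A t)) = Re (\<Sum>a<n. A t $$ (a,a))" using mderD(1)[OF assms, of t] unfolding mtrace_def by auto
  qed
  have "mtrace D = (\<Sum>a<n. D $$ (a,a))" using mderD(2)[OF assms] unfolding mtrace_def by auto
  thus ?thesis unfolding e has_real_derivative_iff_has_vector_derivative
    by (auto intro!: has_vector_derivative_Re has_vector_derivative_sum mderD(3)[OF assms])
qed

lemma mder_linear: assumes "A \<in> carrier_mat n n" "X \<in> carrier_mat n n"
  shows "mder (\<lambda>t. A + complex_of_real t \<cdot>\<^sub>m X) X x n n"
  unfolding mder_def
proof (intro conjI allI impI)
  fix a b assume ab: "a < n" "b < n"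
  have e: "(\<lambda>t. (A + complex_of_real t \<cdot>\<^sub>m X) $$ (a,b)) = (\<lambda>t. A $$ (a,b) + t *\<^sub>R X $$ (a,b))"
    using assms ab by (auto simp: scaleR_conv_of_real)
  have "((\<lambda>t. t *\<^sub>R X $$ (a,b)) has_vector_derivative 1 *\<^sub>R X $$ (a,b)) (at x)"
    by (rule bounded_linear.has_vector_derivative[OF bounded_linear_scaleR_left has_vector_derivative_id])
  hence "((\<lambda>t. A $$ (a,b) + t *\<^sub>R X $$ (a,b)) has_vector_derivative 0 + 1 *\<^sub>R X $$ (a,b)) (at x)"
    by (rule has_vector_derivative_add[OF has_vector_derivative_const])
  thus "((\<lambda>t. (A + complex_of_real t \<cdot>\<^sub>m X) $$ (a,b)) has_vector_derivative X $$ (a,b)) (at x)"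
    unfolding e by simp
qed (use assms in auto)


lemma vdiff_const: "vdiff (\<lambda>t. c) x"
  unfolding vdiff_def by (auto intro: has_vector_derivative_const)

lemma vdiff_mult: "vdiff f x \<Longrightarrow> vdiff g x \<Longrightarrow> vdiff (\<lambda>t. f t * g t) x"
  unfolding vdiff_def using has_vector_derivative_mult by blast

lemma vdiff_add: "vdiff f x \<Longrightarrow> vdiff g x \<Longrightarrow> vdiff (\<lambda>t. f t + g t) x"
  unfolding vdiff_def using has_vector_derivative_add by blast

lemma vdiff_prod: "finite I \<Longrightarrow> (\<And>i. i \<in> I \<Longrightarrow> vdiff (f i) x) \<Longrightarrow> vdiff (\<lambda>t. \<Prod>i\<in>I. f i t) x"
proof (induction I rule: finite_induct)
  case empty
  then show ?case by (simp add: vdiff_const)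
next
  case (insert a I)
  then show ?case by (simp add: vdiff_mult)
qed

lemma vdiff_sum: "finite I \<Longrightarrow> (\<And>i. i \<in> I \<Longrightarrow> vdiff (f i) x) \<Longrightarrow> vdiff (\<lambda>t. \<Sum>i\<in>I. f i t) x"
proof (induction I rule: finite_induct)
  case empty
  then show ?case by (simp add: vdiff_const)
next
  case (insert a I)
  then show ?case by (simp add: vdiff_add)
qed

lemma vdiff_inverse: assumes "vdiff f x" "f x \<noteq> 0" shows "vdiff (\<lambda>t. inverse (f t)) x"
proof -
  obtain D where D: "(f has_vector_derivative D) (at x)" using assms unfolding vdiff_def by auto
  note dd = DERIV_inverse[OF assms(2), of UNIV]
  from field_vector_diff_chain_at[OF D dd] show ?thesis unfolding vdiff_def o_def by auto
qed

lemma vdiff_cong: "(\<And>t. f t = g t) \<Longrightarrow> vdiff g x \<Longrightarrow> vdiff f x"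
  by (metis ext)

lemma det_vdiff: assumes B: "\<And>t. B t \<in> carrier_mat n n"
  and e: "\<And>a b. a < n \<Longrightarrow> b < n \<Longrightarrow> vdiff (\<lambda>t. B t $$ (a,b)) x"
  shows "vdiff (\<lambda>t. Determinant.det (B t)) x"
proof (rule vdiff_cong)
  fix t show "Determinant.det (B t) = (\<Sum> p \<in> {p. p permutes {0 ..< n}}. signof p * (\<Prod> i = 0 ..< n. B t $$ (i, p i)))"
    by (rule det_def'[OF B])
next
  show "vdiff (\<lambda>t. \<Sum> p \<in> {p. p permutes {0 ..< n}}. signof p * (\<Prod> i = 0 ..< n. B t $$ (i, p i))) x"
  proof (intro vdiff_sum vdiff_mult vdiff_const vdiff_prod finite_permutations)
    fix p i assume p: "p \<in> {p. p permutes {0 ..< n}}" and i: "i \<in> {0..<n}"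
    have "p i \<in> {0..<n}" using p i by (simp add: permutes_in_image)
    thus "vdiff (\<lambda>t. B t $$ (i, p i)) x" using i by (intro e) auto
  qed auto
qed

lemma mder_vdiff: "mder A D x r c \<Longrightarrow> a < r \<Longrightarrow> b < c \<Longrightarrow> vdiff (\<lambda>t. A t $$ (a,b)) x"
  unfolding vdiff_def using mderD(3) by blast

lemma vdiff_isCont: "vdiff f x \<Longrightarrow> isCont f x"
  unfolding vdiff_def using has_vector_derivative_continuous by blast

lemma inv2_vdiff: assumes A: "mder A D x n n" and d: "Determinant.det (A x) \<noteq> 0"
  and ab: "a < n" "b < n"
  shows "vdiff (\<lambda>t. inv2 (A t) $$ (a,b)) x"
proof (rule vdiff_cong)
  fix t
  have At: "A t \<in> carrier_mat n n" using mderD(1)[OF A] .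
  show "inv2 (A t) $$ (a,b) = inverse (Determinant.det (A t)) * ((-1)^(b+a) * Determinant.det (mat_delete (A t) b a))"
    unfolding inv2_def adj_mat_def cofactor_def using At ab by (simp add: field_simps)
next
  have dA: "vdiff (\<lambda>t. Determinant.det (A t)) x"
    by (rule det_vdiff[OF mderD(1)[OF A]]) (rule mder_vdiff[OF A])
  have dM: "vdiff (\<lambda>t. Determinant.det (mat_delete (A t) b a)) x"
  proof (rule det_vdiff)
    fix t show "mat_delete (A t) b a \<in> carrier_mat (n-1) (n-1)" using mat_delete_carrier[OF mderD(1)[OF A]] .
  next
    fix i j assume ij: "i < n - 1" "j < n - 1"
    show "vdiff (\<lambda>t. mat_delete (A t) b a $$ (i, j)) x"
    proof (rule vdiff_cong)
      fix t show "mat_delete (A t) b a $$ (i, j) = A t $$ (if i < b then i else Suc i, if j < a then j else Suc j)"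
        unfolding mat_delete_def using mderD(1)[OF A, of t] ij by auto
    next
      show "vdiff (\<lambda>t. A t $$ (if i < b then i else Suc i, if j < a then j else Suc j)) x"
        by (rule mder_vdiff[OF A]) (use ij in auto)
    qed
  qed
  show "vdiff (\<lambda>t. inverse (Determinant.det (A t)) * ((-1)^(b+a) * Determinant.det (mat_delete (A t) b a))) x"
    by (intro vdiff_mult vdiff_inverse dA d vdiff_const dM)
qed

lemma mder_inv2_ex: assumes A: "mder A D x n n" and d: "Determinant.det (A x) \<noteq> 0"
  shows "\<exists>E. mder (\<lambda>t. inv2 (A t)) E x n n"
proof -
  define E where "E = mat n n (\<lambda>(a,b). SOME e. ((\<lambda>t. inv2 (A t) $$ (a,b)) has_vector_derivative e) (at x))"
  have "mder (\<lambda>t. inv2 (A t)) E x n n"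
  proof (rule mderI)
    fix a b assume ab: "a < n" "b < n"
    have "\<exists>e. ((\<lambda>t. inv2 (A t) $$ (a,b)) has_vector_derivative e) (at x)"
      using inv2_vdiff[OF A d ab] unfolding vdiff_def .
    hence "((\<lambda>t. inv2 (A t) $$ (a,b)) has_vector_derivative (SOME e. ((\<lambda>t. inv2 (A t) $$ (a,b)) has_vector_derivative e) (at x))) (at x)"
      by (rule someI_ex)
    thus "((\<lambda>t. inv2 (A t) $$ (a,b)) has_vector_derivative E $$ (a,b)) (at x)" unfolding E_def using ab by simp
  qed (use mderD(1)[OF A] E_def in auto)
  thus ?thesis by blast
qed

lemma det_near: assumes A: "mder A D x n n" and d: "Determinant.det (A x) \<noteq> 0"
  shows "\<exists>e>0. \<forall>y. dist x y < e \<longrightarrow> Determinant.det (A y) \<noteq> 0"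
proof -
  have dA: "vdiff (\<lambda>t. Determinant.det (A t)) x"
    by (rule det_vdiff[OF mderD(1)[OF A]]) (rule mder_vdiff[OF A])
  show ?thesis using continuous_at_avoid[OF vdiff_isCont[OF dA] d] .
qed

lemma mder_inv2: assumes A: "mder A D x n n" and d: "Determinant.det (A x) \<noteq> 0"
  shows "mder (\<lambda>t. inv2 (A t)) (- (inv2 (A x) * D * inv2 (A x))) x n n"
proof -
  obtain E where E: "mder (\<lambda>t. inv2 (A t)) E x n n" using mder_inv2_ex[OF A d] by auto
  have Ax: "A x \<in> carrier_mat n n" using mderD(1)[OF A] .
  have Dc: "D \<in> carrier_mat n n" using mderD(2)[OF A] .
  have Ec: "E \<in> carrier_mat n n" using mderD(2)[OF E] .
  have Tc: "inv2 (A x) \<in> carrier_mat n n" using Ax by simp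
  hence Td: "dim_row (inv2 (A x)) = n" "dim_col (inv2 (A x)) = n" by auto
  note P = mder_mult[OF E A]
  obtain e where e: "e > 0" "\<And>y. dist x y < e \<Longrightarrow> Determinant.det (A y) \<noteq> 0" using det_near[OF A d] by auto
  have Z: "inv2 (A x) * D + E * A x = 0\<^sub>m n n"
  proof (rule eq_matI)
    fix a b assume ab: "a < dim_row (0\<^sub>m n n :: complex mat)" "b < dim_col (0\<^sub>m n n :: complex mat)"
    hence ab: "a < n" "b < n" by auto
    have h1: "((\<lambda>t. (inv2 (A t) * A t) $$ (a,b)) has_vector_derivative (inv2 (A x) * D + E * A x) $$ (a,b)) (at x)"
      using mderD(3)[OF P ab] .
    have h2: "((\<lambda>t. (inv2 (A t) * A t) $$ (a,b)) has_vector_derivative 0) (at x)"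
    proof (rule has_vector_derivative_transform_within_open[OF has_vector_derivative_const[of "1\<^sub>m n $$ (a,b)"]])
      show "open (ball x e)" by simp
      show "x \<in> ball x e" using e by simp
      fix y assume "y \<in> ball x e"
      hence "Determinant.det (A y) \<noteq> 0" using e by auto
      hence "inv2 (A y) * A y = 1\<^sub>m n" using inv2(2)[OF mderD(1)[OF A]] by auto
      thus "1\<^sub>m n $$ (a,b) = (inv2 (A y) * A y) $$ (a,b)" by simp
    qed
    show "(inv2 (A x) * D + E * A x) $$ (a,b) = 0\<^sub>m n n $$ (a,b)"
      using vector_derivative_unique_at[OF h1 h2] ab by simp
  qed (use Tc Dc Ec Ax in auto)
  have EA: "E * A x = - (inv2 (A x) * D)"
  proof (rule eq_matI)
    fix a b assume ab: "a < dim_row (- (inv2 (A x) * D))" "b < dim_col (- (inv2 (A x) * D))"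
    hence ab: "a < n" "b < n" using Tc Dc by auto
    have "(inv2 (A x) * D + E * A x) $$ (a,b) = 0" using Z ab by simp
    hence "(inv2 (A x) * D) $$ (a,b) + (E * A x) $$ (a,b) = 0" using ab Ec Ax by simp
    thus "(E * A x) $$ (a,b) = (- (inv2 (A x) * D)) $$ (a,b)" using ab Tc Dc by (simp add: eq_neg_iff_add_eq_0 add.commute)
  qed (use Td Dc Ec Ax in auto)
  have "E = E * (A x * inv2 (A x))" using inv2(1)[OF Ax d] Ec by simp
  also have "\<dots> = (E * A x) * inv2 (A x)" using assoc_mult_mat[OF Ec Ax Tc] by simp
  also have "\<dots> = - (inv2 (A x) * D * inv2 (A x))" unfolding EA
    by (rule uminus_mult_left_mat) (use Td Dc in auto)
  finally show ?thesis using E by simp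
qed


lemma mder_eq: "mder A D x r c \<Longrightarrow> D = D' \<Longrightarrow> mder A D' x r c" by simp

lemma mder_cong: "mder A D x r c \<Longrightarrow> (\<And>t. A t = B t) \<Longrightarrow> mder B D x r c"
  by (metis ext)

lemma smult_mult_smult: assumes "X \<in> carrier_mat n k" "Y \<in> carrier_mat k l"
  shows "(a \<cdot>\<^sub>m X) * (b \<cdot>\<^sub>m Y) = ((a * b)::complex) \<cdot>\<^sub>m (X * Y)"
proof -
  have "(a \<cdot>\<^sub>m X) * (b \<cdot>\<^sub>m Y) = a \<cdot>\<^sub>m (X * (b \<cdot>\<^sub>m Y))" by (rule mult_smult_assoc_mat) (use assms in auto)
  also have "X * (b \<cdot>\<^sub>m Y) = b \<cdot>\<^sub>m (X * Y)" by (rule mult_smult_distrib) (use assms in auto)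
  finally show ?thesis by (simp add: smult_smult_mat)
qed

lemma smult_comm_mult: assumes X: "X \<in> carrier_mat d d"
  shows "(a \<cdot>\<^sub>m X) * (b \<cdot>\<^sub>m X) = (b \<cdot>\<^sub>m X) * ((a::complex) \<cdot>\<^sub>m X)"
  unfolding smult_mult_smult[OF X X] by (simp add: mult.commute)

lemma one_plus_comm: assumes A: "A \<in> carrier_mat d d" and B: "B \<in> carrier_mat d d" and AB: "A * B = B * (A :: complex mat)"
  shows "(1\<^sub>m d + A) * (1\<^sub>m d + B) = (1\<^sub>m d + B) * (1\<^sub>m d + A)"
proof -
  have e1: "(1\<^sub>m d + A) * (1\<^sub>m d + B) = (1\<^sub>m d + A) + ((1\<^sub>m d + A) * B)"
    by (subst mult_add_distrib_mat[of "1\<^sub>m d + A" d d "1\<^sub>m d" d B]) (use A B in auto)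
  have e2: "(1\<^sub>m d + A) * B = B + A * B"
    by (subst add_mult_distrib_mat[of "1\<^sub>m d" d d A B d]) (use A B in auto)
  have e3: "(1\<^sub>m d + B) * (1\<^sub>m d + A) = (1\<^sub>m d + B) + ((1\<^sub>m d + B) * A)"
    by (subst mult_add_distrib_mat[of "1\<^sub>m d + B" d d "1\<^sub>m d" d A]) (use A B in auto)
  have e4: "(1\<^sub>m d + B) * A = A + B * A"
    by (subst add_mult_distrib_mat[of "1\<^sub>m d" d d B A d]) (use A B in auto)
  show ?thesis unfolding e1 e2 e3 e4 AB using A B by (intro eq_matI) auto
qed

lemma adj_one_plus: assumes X: "X \<in> carrier_mat d d" and h: "adj X = - X"
  shows "adj (1\<^sub>m d + complex_of_real t \<cdot>\<^sub>m X) = 1\<^sub>m d + complex_of_real t \<cdot>\<^sub>m (- X)"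
proof -
  have "adj (1\<^sub>m d + complex_of_real t \<cdot>\<^sub>m X) = 1\<^sub>m d + cnj (complex_of_real t) \<cdot>\<^sub>m adj X"
    using X by (simp add: adj_add[of _ d d] adj_smult)
  thus ?thesis unfolding h by simp
qed

lemma adj_inv2: assumes A: "A \<in> carrier_mat n n" and d: "Determinant.det A \<noteq> 0"
  shows "adj (inv2 A) = inv2 (adj A)" "Determinant.det (adj A) \<noteq> 0"
proof -
  have Tc: "inv2 A \<in> carrier_mat n n" using A by simp
  have "adj (A * inv2 A) = 1\<^sub>m n" using inv2(1)[OF A d] by simp
  hence 1: "adj (inv2 A) * adj A = 1\<^sub>m n" using adj_mult[OF A Tc] by simp
  hence 2: "adj A * adj (inv2 A) = 1\<^sub>m n" using mat_mult_left_right_inverse[of "adj (inv2 A)" n "adj A"] A Tc by auto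
  show "Determinant.det (adj A) \<noteq> 0" using det_mult[of "adj A" n "adj (inv2 A)"] 2 A Tc by auto
  from minv_unique(1)[of "adj A" n, OF _ _ 2] inv2(3)[of "adj A" n, OF _ this] A Tc
  show "adj (inv2 A) = inv2 (adj A)" by auto
qed

definition cayL :: "nat \<Rightarrow> complex mat \<Rightarrow> real \<Rightarrow> complex mat" where
  "cayL d X t = 1\<^sub>m d + complex_of_real t \<cdot>\<^sub>m (- X)"
definition cayM :: "nat \<Rightarrow> complex mat \<Rightarrow> real \<Rightarrow> complex mat" where
  "cayM d X t = 1\<^sub>m d + complex_of_real t \<cdot>\<^sub>m X"
definition cayU :: "nat \<Rightarrow> complex mat \<Rightarrow> real \<Rightarrow> complex mat" where
  "cayU d X t = cayM d X t * inv2 (cayL d X t)"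

lemma cay_carrier[simp]: "X \<in> carrier_mat d d \<Longrightarrow> cayL d X t \<in> carrier_mat d d"
  "X \<in> carrier_mat d d \<Longrightarrow> cayM d X t \<in> carrier_mat d d"
  unfolding cayL_def cayM_def by auto

lemma cayU_carrier[simp]: "X \<in> carrier_mat d d \<Longrightarrow> cayU d X t \<in> carrier_mat d d"
  unfolding cayU_def using mult_carrier_mat[OF cay_carrier(2) inv2_carrier[OF cay_carrier(1)]] by blast

lemma cay_0: "X \<in> carrier_mat d d \<Longrightarrow> cayL d X 0 = 1\<^sub>m d" "X \<in> carrier_mat d d \<Longrightarrow> cayM d X 0 = 1\<^sub>m d"
  unfolding cayL_def cayM_def by (auto intro!: eq_matI)

lemma cayU_0: "X \<in> carrier_mat d d \<Longrightarrow> cayU d X 0 = 1\<^sub>m d"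
  unfolding cayU_def by (simp add: cay_0)

lemma cay_unitary: assumes X: "X \<in> carrier_mat d d" and h: "adj X = - X"
  and dL: "Determinant.det (cayL d X t) \<noteq> 0" and dM: "Determinant.det (cayM d X t) \<noteq> 0"
  shows "cayU d X t * adj (cayU d X t) = 1\<^sub>m d"
proof -
  let ?L = "cayL d X t" and ?M = "cayM d X t"
  have Lc: "?L \<in> carrier_mat d d" and Mc: "?M \<in> carrier_mat d d" using X by auto
  have NC: "inv2 ?L \<in> carrier_mat d d" using Lc by simp
  have IM: "inv2 ?M \<in> carrier_mat d d" using Mc by simp
  have aM: "adj ?M = ?L" unfolding cayM_def cayL_def using adj_one_plus[OF X h] .
  have mX: "- X \<in> carrier_mat d d" using X by simp
  have comm: "?L * ?M = ?M * ?L" unfolding cayL_def cayM_def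
    by (rule one_plus_comm) (use X smult_comm_mult[OF X, of "complex_of_real t" "- complex_of_real t"] in \<open>auto simp: uminus_mult_left_mat\<close>)
  have aL: "adj ?L = ?M" using aM by (metis adj_adj)
  have "adj (cayU d X t) = adj (inv2 ?L) * adj ?M" unfolding cayU_def using adj_mult[OF Mc NC] .
  also have "\<dots> = inv2 (adj ?L) * ?L" unfolding aM adj_inv2(1)[OF Lc dL] ..
  finally have aU: "adj (cayU d X t) = inv2 ?M * ?L" unfolding aL .
  have "adj (cayU d X t) * cayU d X t = inv2 ?M * ?L * cayU d X t" unfolding aU ..
  also have "\<dots> = inv2 ?M * ?L * (?M * inv2 ?L)" unfolding cayU_def ..
  also have "\<dots> = inv2 ?M * (?L * ?M) * inv2 ?L" using assoc4[OF IM Lc Mc NC] by simp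
  also have "\<dots> = inv2 ?M * (?M * ?L) * inv2 ?L" unfolding comm ..
  also have "\<dots> = (inv2 ?M * ?M) * (?L * inv2 ?L)" using assoc4[OF IM Mc Lc NC] .
  also have "\<dots> = 1\<^sub>m d" using inv2(1)[OF Lc dL] inv2(2)[OF Mc dM] by simp
  finally have "adj (cayU d X t) * cayU d X t = 1\<^sub>m d" .
  thus ?thesis using mat_mult_left_right_inverse[of "adj (cayU d X t)" d "cayU d X t"] X by auto
qed


declare minus_carrier_mat[simp]

lemma tr_add: "A \<in> carrier_mat n n \<Longrightarrow> B \<in> carrier_mat n n \<Longrightarrow> mtrace (A + B) = mtrace A + mtrace B"
  by (rule mtrace_add)

lemma tr_uminus: "A \<in> carrier_mat n n \<Longrightarrow> mtrace (- A) = - mtrace A"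
  unfolding mtrace_def by (simp add: sum_negf)

lemma descent_value:
  assumes S0: "S0 \<in> carrier_mat d d" and T0: "T0 \<in> carrier_mat d d" and P: "P \<in> carrier_mat d d"
  and ST: "S0 * T0 = 1\<^sub>m d"
  and G: "G = S0 - T0 * T0 * T0" and K: "K = G * P - P * G" and sk: "adj K = - K" and K0: "K \<noteq> 0\<^sub>m d d"
  and C: "C = P * (K + K) - (K + K) * P"
  shows "Re (mtrace (S0 * C + C * S0)) + Re (mtrace (T0 * (- (T0 * C * T0)) + (- (T0 * C * T0)) * T0)) < 0"
proof -
  have Gc: "G \<in> carrier_mat d d" unfolding G using S0 T0 by auto
  have Kc: "K \<in> carrier_mat d d" unfolding K using Gc P by auto
  have Yc: "K + K \<in> carrier_mat d d" using Kc by auto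
  have Cc: "C \<in> carrier_mat d d" unfolding C using P Yc by auto
  have T3: "T0 * T0 * T0 \<in> carrier_mat d d" using T0 by auto
  have X1: "mtrace (S0 * C + C * S0) = 2 * mtrace (S0 * C)"
    using tr_add[of "S0 * C" d "C * S0"] mtrace_comm[OF Cc S0] S0 Cc by auto
  have X2a: "mtrace (T0 * (- (T0 * C * T0)) + (- (T0 * C * T0)) * T0) = 2 * mtrace (T0 * (- (T0 * C * T0)))"
  proof -
    have a: "T0 * (- (T0 * C * T0)) \<in> carrier_mat d d" "(- (T0 * C * T0)) * T0 \<in> carrier_mat d d" using T0 Cc by auto
    have "mtrace ((- (T0 * C * T0)) * T0) = mtrace (T0 * (- (T0 * C * T0)))"
      by (rule mtrace_comm) (use T0 Cc in auto)
    thus ?thesis using tr_add[OF a] by simp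
  qed
  have X2b: "mtrace (T0 * (- (T0 * C * T0))) = - mtrace (T0 * T0 * T0 * C)"
  proof -
    have "T0 * (- (T0 * C * T0)) = - (T0 * (T0 * C * T0))" by (rule uminus_mult_right_mat) (use T0 Cc in auto)
    hence "mtrace (T0 * (- (T0 * C * T0))) = - mtrace (T0 * (T0 * C * T0))" using tr_uminus[of _ d] T0 Cc by auto
    also have "T0 * (T0 * C * T0) = (T0 * T0 * C) * T0" using T0 Cc by (simp add: assoc_mult_mat[of _ d d _ d _ d])
    also have "mtrace ((T0 * T0 * C) * T0) = mtrace (T0 * (T0 * T0 * C))" by (rule mtrace_comm) (use T0 Cc in auto)
    also have "T0 * (T0 * T0 * C) = T0 * T0 * T0 * C" using T0 Cc by (simp add: assoc_mult_mat[of _ d d _ d _ d])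
    finally show ?thesis .
  qed
  have X3: "mtrace (S0 * C) - mtrace (T0 * T0 * T0 * C) = mtrace (G * C)"
  proof -
    have "G * C = S0 * C - T0 * T0 * T0 * C" unfolding G by (rule minus_mult_distrib_mat[OF S0 T3 Cc])
    thus ?thesis using mtrace_minus[of "S0 * C" d "T0 * T0 * T0 * C"] S0 T3 Cc by auto
  qed
  have X4: "mtrace (G * C) = mtrace (K * (K + K))"
  proof -
    have GPc: "G * P \<in> carrier_mat d d" "P * G \<in> carrier_mat d d" using Gc P by auto
    have "G * C = G * (P * (K + K)) - G * ((K + K) * P)" unfolding C
      by (rule mult_minus_distrib_mat) (use Gc P Yc Kc in auto)
    hence "mtrace (G * C) = mtrace (G * (P * (K + K))) - mtrace (G * ((K + K) * P))"
      using mtrace_minus[of "G * (P * (K + K))" d "G * ((K + K) * P)"] Gc P Yc by auto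
    also have "G * (P * (K + K)) = G * P * (K + K)" using Gc P Yc by (simp add: assoc_mult_mat[of _ d d _ d _ d])
    also have "mtrace (G * ((K + K) * P)) = mtrace (P * G * (K + K))"
    proof -
      have "G * ((K + K) * P) = (G * (K + K)) * P" using Gc P Yc by (simp add: assoc_mult_mat[of _ d d _ d _ d])
      also have "mtrace \<dots> = mtrace (P * (G * (K + K)))" by (rule mtrace_comm) (use Gc P Yc in auto)
      also have "P * (G * (K + K)) = P * G * (K + K)" using Gc P Yc by (simp add: assoc_mult_mat[of _ d d _ d _ d])
      finally show ?thesis .
    qed
    also have "mtrace (G * P * (K + K)) - mtrace (P * G * (K + K)) = mtrace (G * P * (K + K) - P * G * (K + K))"
      using mtrace_minus[of "G * P * (K + K)" d "P * G * (K + K)"] GPc Yc by auto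
    also have "G * P * (K + K) - P * G * (K + K) = K * (K + K)"
      using minus_mult_distrib_mat[OF GPc Yc] K by simp
    finally show ?thesis .
  qed
  have X5: "mtrace (K * (K + K)) = - 2 * mtrace (adj K * K)"
  proof -
    have "K * (K + K) = K * K + K * K" by (rule mult_add_distrib_mat) (use Kc in auto)
    hence "mtrace (K * (K + K)) = 2 * mtrace (K * K)" using tr_add[of "K * K" d "K * K"] Kc by auto
    also have "K * K = - (adj K * K)" unfolding sk using uminus_mult_left_mat[of K K] Kc by simp
    also have "mtrace (- (adj K * K)) = - mtrace (adj K * K)" by (rule tr_uminus[of _ d]) (use Kc in auto)
    finally show ?thesis by simp
  qed
  have pos: "Re (mtrace (adj K * K)) > 0"
  proof -
    have "Re (mtrace (adj K * K)) \<ge> 0" by (rule mtrace_adj_self_nonneg[OF Kc])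
    moreover have "Re (mtrace (adj K * K)) \<noteq> 0"
    proof
      assume "Re (mtrace (adj K * K)) = 0"
      moreover have "Im (mtrace (adj K * K)) = 0" using mtrace_adj_self[OF Kc] by simp
      ultimately have "mtrace (adj K * K) = 0" by (simp add: complex_eq_iff)
      thus False using mtrace_adj_self_zero[OF Kc] K0 by auto
    qed
    ultimately show ?thesis by linarith
  qed
  have "Re (mtrace (S0 * C + C * S0)) + Re (mtrace (T0 * (- (T0 * C * T0)) + (- (T0 * C * T0)) * T0))
      = 2 * Re (mtrace (S0 * C) - mtrace (T0 * T0 * T0 * C))"
    unfolding X1 X2a X2b by simp
  also have "\<dots> = - 4 * Re (mtrace (adj K * K))" unfolding X3 X4 X5 by simp
  finally show ?thesis using pos by simp
qed


lemma RS_op_upd: assumes sys: "is_system m k d V" and j: "j < m" and W: "W \<in> carrier_mat (k j) d"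
  shows "RS_op m d (V(j := W)) = (RS_op m d V - adj (V j) * V j) + adj W * W"
proof (rule eq_matI)
  have Vj: "V j \<in> carrier_mat (k j) d" using sys j unfolding is_system_def by auto
  fix a b assume ab: "a < dim_row ((RS_op m d V - adj (V j) * V j) + adj W * W)"
    "b < dim_col ((RS_op m d V - adj (V j) * V j) + adj W * W)"
  hence ab: "a < d" "b < d" using W by auto
  define F where "F i = (adj (V i) * V i) $$ (a,b)" for i
  define F' where "F' i = (adj ((V(j := W)) i) * (V(j := W)) i) $$ (a,b)" for i
  have "RS_op m d (V(j := W)) $$ (a,b) = (\<Sum>i<m. F' i)" unfolding RS_op_def F'_def using ab by simp
  also have "\<dots> = F' j + (\<Sum>i\<in>{..<m} - {j}. F' i)" using j by (subst sum.remove[of _ j]) auto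
  also have "(\<Sum>i\<in>{..<m} - {j}. F' i) = (\<Sum>i\<in>{..<m} - {j}. F i)" unfolding F_def F'_def by (intro sum.cong) auto
  also have "\<dots> = (\<Sum>i<m. F i) - F j" using j by (subst sum.remove[of _ j]) auto
  finally have "RS_op m d (V(j := W)) $$ (a,b) = F' j + ((\<Sum>i<m. F i) - F j)" .
  moreover have "(\<Sum>i<m. F i) = RS_op m d V $$ (a,b)" unfolding RS_op_def F_def using ab by simp
  ultimately show "RS_op m d (V(j := W)) $$ (a,b) = ((RS_op m d V - adj (V j) * V j) + adj W * W) $$ (a,b)"
    unfolding F_def F'_def using ab Vj W by simp
qed (use assms in \<open>auto simp: is_system_def RS_op_def\<close>)

lemma tendsto_frob0: assumes A: "A \<in> carrier_mat r c" and B: "\<And>t. B t \<in> carrier_mat r c"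
  and e: "\<And>a b. a < r \<Longrightarrow> b < c \<Longrightarrow> ((\<lambda>t. B t $$ (a,b)) \<longlongrightarrow> A $$ (a,b)) F"
  shows "((\<lambda>t. frob (A - B t)) \<longlongrightarrow> 0) F"
proof -
  have eq: "(\<lambda>t. frob (A - B t)) = (\<lambda>t. sqrt (\<Sum>a<r. \<Sum>b<c. (cmod (A $$ (a,b) - B t $$ (a,b)))\<^sup>2))"
  proof (rule ext)
    fix t show "frob (A - B t) = sqrt (\<Sum>a<r. \<Sum>b<c. (cmod (A $$ (a,b) - B t $$ (a,b)))\<^sup>2)"
      unfolding frob_def using B[of t] by auto
  qed
  have "((\<lambda>t. sqrt (\<Sum>a<r. \<Sum>b<c. (cmod (A $$ (a,b) - B t $$ (a,b)))\<^sup>2)) \<longlongrightarrow>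
      sqrt (\<Sum>a<r. \<Sum>b<c. (cmod (A $$ (a,b) - A $$ (a,b)))\<^sup>2)) F"
    by (intro tendsto_intros e) auto
  thus ?thesis unfolding eq by simp
qed

lemma tendsto_dP0: assumes W0: "\<And>i. i < m \<Longrightarrow> W0 i \<in> carrier_mat (k i) d"
  and W: "\<And>i t. i < m \<Longrightarrow> W t i \<in> carrier_mat (k i) d"
  and e: "\<And>i a b. i < m \<Longrightarrow> a < k i \<Longrightarrow> b < d \<Longrightarrow> ((\<lambda>t. W t i $$ (a,b)) \<longlongrightarrow> W0 i $$ (a,b)) F"
  shows "((\<lambda>t. dP m W0 (W t)) \<longlongrightarrow> 0) F"
proof -
  have "((\<lambda>t. sqrt (\<Sum>i<m. (frob (W0 i - W t i))\<^sup>2)) \<longlongrightarrow> sqrt (\<Sum>i<m. 0\<^sup>2)) F"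
    by (intro tendsto_intros tendsto_frob0[OF W0 W e]) auto
  thus ?thesis unfolding dP_def by simp
qed

lemma near0_right: assumes "\<exists>e>0. \<forall>y. dist 0 y < e \<longrightarrow> P y" shows "eventually P (at_right (0::real))"
proof -
  obtain e where e: "e > 0" "\<And>y. dist 0 y < e \<Longrightarrow> P y" using assms by auto
  show ?thesis unfolding eventually_at_right_field using e by (intro exI[of _ e]) (auto simp: dist_real_def)
qed

lemma mder_tendsto: "mder A D x r c \<Longrightarrow> a < r \<Longrightarrow> b < c \<Longrightarrow> ((\<lambda>t. A t $$ (a,b)) \<longlongrightarrow> A x $$ (a,b)) (at x)"
  using vdiff_isCont[OF mder_vdiff] isCont_def by blast


lemma adj_minus_sq: assumes "A \<in> carrier_mat d d" "B \<in> carrier_mat d d"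
  shows "adj (A * B - B * A) = adj B * adj A - adj A * adj B"
  using assms by (simp add: adj_minus[of _ d d] adj_mult[of _ d d])

lemma descent:
  assumes V: "V \<in> Pv v m k d" and j: "j < m"
  and S0: "S0 = RS_op m d V" and T0: "T0 = inv2 S0" and P: "P = adj (V j) * V j"
  and G: "G = S0 - T0 * T0 * T0" and K: "K = G * P - P * G" and K0: "K \<noteq> 0\<^sub>m d d"
  shows "\<not> local_min_FP v m k d V (can_dual m d V)"
proof
  assume lm: "local_min_FP v m k d V (can_dual m d V)"
  then obtain \<epsilon> where \<epsilon>: "\<epsilon> > 0" "\<And>V' W'. (V', W') \<in> DRS v m k d \<Longrightarrow> dP m V V' + dP m (can_dual m d V) W' < \<epsilon>
        \<Longrightarrow> FP m d V (can_dual m d V) \<le> FP m d V' W'"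
    unfolding local_min_FP_def by blast
  have sys: "is_system m k d V" using Pv_system[OF V] .
  have Vc: "\<And>i. i < m \<Longrightarrow> V i \<in> carrier_mat (k i) d" using sys unfolding is_system_def by auto
  have Vj: "V j \<in> carrier_mat (k j) d" using Vc[OF j] .
  note cdf = can_dual_facts[OF V]
  have S0c: "S0 \<in> carrier_mat d d" unfolding S0 by simp
  have dS0: "Determinant.det S0 \<noteq> 0" unfolding S0 using Pv_det[OF V] .
  have T0c: "T0 \<in> carrier_mat d d" unfolding T0 using S0c by simp
  have Pc: "P \<in> carrier_mat d d" unfolding P using Vj by auto
  have Gc: "G \<in> carrier_mat d d" unfolding G using S0c T0c by auto
  have Kc: "K \<in> carrier_mat d d" unfolding K using Gc Pc by auto
  have hS: "adj S0 = S0" unfolding S0 using RS_op_herm[OF sys] .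
  have hT: "adj T0 = T0" unfolding T0 S0 using cdf(4) .
  have hP: "adj P = P" unfolding P using adj_mult[OF adj_carrier[OF Vj] Vj] by simp
  have hG: "adj G = G"
  proof -
    have "adj (T0 * T0 * T0) = T0 * T0 * T0" using T0c hT
      by (simp add: adj_mult[of _ d d _ d] assoc_mult_mat[of _ d d _ d _ d])
    thus ?thesis unfolding G using S0c T0c hS by (simp add: adj_minus[of _ d d])
  qed
  have sk: "adj K = - K"
  proof -
    have "adj K = P * G - G * P" unfolding K using adj_minus_sq[OF Gc Pc] hG hP by simp
    also have "\<dots> = - K" unfolding K using Gc Pc by (intro eq_matI) auto
    finally show ?thesis .
  qed
  define U where "U t = cayU d K t" for t
  define Vt where "Vt t = V(j := V j * U t)" for t
  define S where "S t = RS_op m d (Vt t)" for t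
  define T where "T t = inv2 (S t)" for t
  define C where "C = P * (K + K) - (K + K) * P"
  define g where "g t = Re (mtrace (S t * S t)) + Re (mtrace (T t * T t))" for t
  have Uc: "\<And>t. U t \<in> carrier_mat d d" unfolding U_def using Kc by simp
  have U0: "U 0 = 1\<^sub>m d" unfolding U_def using cayU_0[OF Kc] .
  have Vt0: "Vt 0 = V" unfolding Vt_def U0 using Vj by simp
  have S0': "S 0 = S0" unfolding S_def Vt0 S0 ..
  have Sid: "S t = (S0 - P) + (adj (U t) * P * U t)" for t
  proof -
    have VU: "V j * U t \<in> carrier_mat (k j) d" using Vj Uc[of t] by auto
    have "adj (V j * U t) * (V j * U t) = adj (U t) * P * U t"
      unfolding adj_mult[OF Vj Uc] P using assoc4[OF adj_carrier[OF Uc] adj_carrier[OF Vj] Vj Uc, symmetric]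
      by simp
    thus ?thesis unfolding S_def Vt_def RS_op_upd[OF sys j VU] S0 P by simp
  qed
  have mL: "mder (cayL d K) (- K) 0 d d" unfolding cayL_def[abs_def]
    by (rule mder_linear) (use Kc in auto)
  have mN: "mder (\<lambda>t. inv2 (cayL d K t)) K 0 d d"
  proof (rule mder_eq[OF mder_inv2[OF mL]])
    show "Determinant.det (cayL d K 0) \<noteq> 0" unfolding cay_0[OF Kc] by simp
    show "- (inv2 (cayL d K 0) * - K * inv2 (cayL d K 0)) = K" unfolding cay_0[OF Kc] inv2_one using Kc by simp
  qed
  have mM: "mder (cayM d K) K 0 d d" unfolding cayM_def[abs_def]
    by (rule mder_linear) (use Kc in auto)
  have mU: "mder U (K + K) 0 d d"
  proof (rule mder_eq[OF mder_cong[OF mder_mult[OF mM mN]]])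
    show "cayM d K t * inv2 (cayL d K t) = U t" for t unfolding U_def cayU_def ..
    show "cayM d K 0 * K + K * inv2 (cayL d K 0) = K + K" unfolding cay_0[OF Kc] inv2_one using Kc by simp
  qed
  have mQ: "mder (\<lambda>t. adj (U t) * P * U t) C 0 d d"
  proof (rule mder_eq[OF mder_mult[OF mder_mult[OF mder_adj[OF mU] mder_const[OF Pc]] mU]])
    have a: "adj (K + K) = - (K + K)" using sk Kc by (simp add: adj_add[of _ d d], intro eq_matI, auto)
    show "adj (U 0) * P * (K + K) + (adj (U 0) * 0\<^sub>m d d + adj (K + K) * P) * U 0 = C"
      unfolding U0 a C_def using Kc Pc by (intro eq_matI) auto
  qed
  have mS: "mder S C 0 d d"
  proof (rule mder_eq[OF mder_cong[OF mder_add[OF mder_const mQ]]])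
    show "S0 - P \<in> carrier_mat d d" using S0c Pc by auto
    show "S0 - P + adj (U t) * P * U t = S t" for t using Sid by simp
    show "0\<^sub>m d d + C = C" unfolding C_def using Kc Pc by (intro eq_matI) auto
  qed
  have dS0': "Determinant.det (S 0) \<noteq> 0" unfolding S0' using dS0 .
  have mT: "mder T (- (T0 * C * T0)) 0 d d"
    using mder_inv2[OF mS dS0'] unfolding T_def[abs_def] S0' T0 .
  have dg: "(g has_real_derivative
      (Re (mtrace (S0 * C + C * S0)) + Re (mtrace (T0 * (- (T0 * C * T0)) + (- (T0 * C * T0)) * T0)))) (at 0)"
  proof -
    have "T 0 = T0" unfolding T_def S0' T0 ..
    thus ?thesis unfolding g_def[abs_def] using mder_trace[OF mder_mult[OF mS mS]] mder_trace[OF mder_mult[OF mT mT]]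
      unfolding S0' by (intro DERIV_add) auto
  qed
  have neg: "Re (mtrace (S0 * C + C * S0)) + Re (mtrace (T0 * (- (T0 * C * T0)) + (- (T0 * C * T0)) * T0)) < 0"
  proof (rule descent_value[OF S0c T0c Pc _ G K sk K0 C_def])
    show "S0 * T0 = 1\<^sub>m d" unfolding T0 S0 using cdf(2) .
  qed
  have T00: "T 0 = T0" unfolding T_def S0' T0 ..
  obtain \<delta> where \<delta>: "\<delta> > 0" "\<And>h. h > 0 \<Longrightarrow> h < \<delta> \<Longrightarrow> g (0 + h) < g 0"
    using DERIV_neg_dec_right[OF dg neg] by blast
  have ev1: "eventually (\<lambda>t. g t < g 0) (at_right 0)"
    unfolding eventually_at_right_field using \<delta> by (intro exI[of _ \<delta>]) auto
  have ev2: "eventually (\<lambda>t. Determinant.det (S t) \<noteq> 0) (at_right 0)"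
    by (rule near0_right) (rule det_near[OF mS dS0'])
  have ev3: "eventually (\<lambda>t. Determinant.det (cayL d K t) \<noteq> 0) (at_right 0)"
    by (rule near0_right) (rule det_near[OF mL], simp add: cay_0[OF Kc])
  have ev4: "eventually (\<lambda>t. Determinant.det (cayM d K t) \<noteq> 0) (at_right 0)"
    by (rule near0_right) (rule det_near[OF mM], simp add: cay_0[OF Kc])
  have mVt: "\<exists>D. mder (\<lambda>t. Vt t i) D 0 (k i) d" if i: "i < m" for i
  proof (cases "i = j")
    case True
    have "mder (\<lambda>t. V j * U t) (V j * (K + K) + 0\<^sub>m (k j) d * U 0) 0 (k j) d"
      by (rule mder_mult[OF mder_const[OF Vj] mU])
    thus ?thesis unfolding Vt_def True by auto
  next
    case False
    have "mder (\<lambda>t. V i) (0\<^sub>m (k i) d) 0 (k i) d" by (rule mder_const[OF Vc[OF i]])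
    thus ?thesis unfolding Vt_def using False by auto
  qed
  have Vtc: "\<And>i t. i < m \<Longrightarrow> Vt t i \<in> carrier_mat (k i) d"
    unfolding Vt_def using Vc Vj Uc by auto
  define Wt where "Wt t = (\<lambda>i. Vt t i * T t)" for t
  have Tc: "\<And>t. T t \<in> carrier_mat d d" unfolding T_def S_def by simp
  have cdV: "can_dual m d V = (\<lambda>i. V i * T0)" unfolding can_dual_def S0[symmetric] cdf(1)[folded S0] T0 ..
  have lim1: "((\<lambda>t. dP m V (Vt t)) \<longlongrightarrow> 0) (at 0)"
  proof (rule tendsto_dP0[OF Vc Vtc])
    fix i a b assume iab: "i < m" "a < k i" "b < d"
    obtain D where D: "mder (\<lambda>t. Vt t i) D 0 (k i) d" using mVt[OF iab(1)] by auto
    show "((\<lambda>t. Vt t i $$ (a, b)) \<longlongrightarrow> V i $$ (a, b)) (at 0)"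
      using mder_tendsto[OF D iab(2,3)] unfolding Vt0 .
  qed
  have lim2: "((\<lambda>t. dP m (can_dual m d V) (Wt t)) \<longlongrightarrow> 0) (at 0)"
  proof (rule tendsto_dP0)
    show "\<And>i. i < m \<Longrightarrow> can_dual m d V i \<in> carrier_mat (k i) d" unfolding cdV using Vc T0c by (meson mult_carrier_mat)
    show "\<And>i t. i < m \<Longrightarrow> Wt t i \<in> carrier_mat (k i) d" unfolding Wt_def using Vtc Tc by (meson mult_carrier_mat)
    fix i a b assume iab: "i < m" "a < k i" "b < d"
    obtain D where D: "mder (\<lambda>t. Vt t i) D 0 (k i) d" using mVt[OF iab(1)] by auto
    show "((\<lambda>t. Wt t i $$ (a, b)) \<longlongrightarrow> can_dual m d V i $$ (a, b)) (at 0)"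
      using mder_tendsto[OF mder_mult[OF D mT] iab(2,3)] unfolding Wt_def cdV Vt0 T00 .
  qed
  have ev5: "eventually (\<lambda>t. dP m V (Vt t) < \<epsilon> / 2) (at_right 0)"
    using order_tendstoD(2)[OF Lim_at_imp_Lim_at_within[OF lim1], of "\<epsilon> / 2" "{0<..}"] \<epsilon>(1) by simp
  have ev6: "eventually (\<lambda>t. dP m (can_dual m d V) (Wt t) < \<epsilon> / 2) (at_right 0)"
    using order_tendstoD(2)[OF Lim_at_imp_Lim_at_within[OF lim2], of "\<epsilon> / 2" "{0<..}"] \<epsilon>(1) by simp
  have "eventually (\<lambda>t. g t < g 0 \<and> Determinant.det (S t) \<noteq> 0 \<and> Determinant.det (cayL d K t) \<noteq> 0
      \<and> Determinant.det (cayM d K t) \<noteq> 0 \<and> dP m V (Vt t) < \<epsilon> / 2 \<and> dP m (can_dual m d V) (Wt t) < \<epsilon> / 2) (at_right 0)"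
    using ev1 ev2 ev3 ev4 ev5 ev6 by (intro eventually_conj)
  then obtain t where t: "g t < g 0" "Determinant.det (S t) \<noteq> 0" "Determinant.det (cayL d K t) \<noteq> 0"
      "Determinant.det (cayM d K t) \<noteq> 0" "dP m V (Vt t) < \<epsilon> / 2" "dP m (can_dual m d V) (Wt t) < \<epsilon> / 2"
    using eventually_happens[of _ "at_right (0::real)"] trivial_limit_at_right_real by blast
  have unit: "U t * adj (U t) = 1\<^sub>m d" unfolding U_def by (rule cay_unitary[OF Kc sk t(3) t(4)])
  have VtPv: "Vt t \<in> Pv v m k d"
    unfolding Pv_def RS_def
  proof (intro CollectI conjI allI impI)
    show "is_system m k d (Vt t)" unfolding is_system_def using Vtc by auto
    show "invertible_mat (RS_op m d (Vt t))" using det_invertible[OF RS_op_carrier] t(2) unfolding S_def by auto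
    fix i assume i: "i < m"
    show "Vt t i * adj (Vt t i) = complex_of_real ((v i)\<^sup>2) \<cdot>\<^sub>m 1\<^sub>m (k i)"
    proof (cases "i = j")
      case True
      have "Vt t j * adj (Vt t j) = V j * U t * (adj (U t) * adj (V j))"
        unfolding Vt_def using adj_mult[OF Vj Uc] by simp
      also have "\<dots> = V j * (U t * adj (U t)) * adj (V j)"
        using assoc4[OF Vj Uc adj_carrier[OF Uc] adj_carrier[OF Vj]] by simp
      also have "\<dots> = V j * adj (V j)" unfolding unit using Vj by simp
      also have "\<dots> = complex_of_real ((v j)\<^sup>2) \<cdot>\<^sub>m 1\<^sub>m (k j)" using V j unfolding Pv_def by auto
      finally show ?thesis using True by simp
    next
      case False
      thus ?thesis unfolding Vt_def using V i unfolding Pv_def by auto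
    qed
  qed
  note cdt = can_dual_facts[OF VtPv]
  have cdeq: "can_dual m d (Vt t) = Wt t"
    unfolding can_dual_def Wt_def T_def S_def inv2(3)[OF RS_op_carrier t(2)[unfolded S_def]] ..
  have FPt: "FP m d (Vt t) (can_dual m d (Vt t)) = g t"
    unfolding FP_def g_def cdt(5) T_def S_def by simp
  have FP0: "FP m d V (can_dual m d V) = g 0"
    unfolding FP_def g_def cdf(5) T00[symmetric] S0'[symmetric] T_def S_def Vt0 by simp
  have "dP m V (Vt t) + dP m (can_dual m d V) (can_dual m d (Vt t)) < \<epsilon>"
    unfolding cdeq using t(5,6) by simp
  from \<epsilon>(2)[OF cdt(8) this] have "FP m d V (can_dual m d V) \<le> FP m d (Vt t) (can_dual m d (Vt t))" .
  thus False unfolding FPt FP0 using t(1) by simp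
qed


lemma quartic_root: fixes c :: real shows "\<exists>r>0. r^4 - c * r^3 - 1 = 0"
proof -
  define R where "R = \<bar>c\<bar> + 2"
  have R: "R \<ge> 2" "R - c \<ge> 2" unfolding R_def by auto
  have "R^3 \<ge> 1" using R(1) by (simp add: one_le_power)
  hence "R^3 * (R - c) \<ge> 1 * 2" using R by (intro mult_mono) auto
  hence fR: "R^4 - c * R^3 - 1 \<ge> 0" by (simp add: algebra_simps power_numeral_reduce)
  have "\<exists>x. 0 \<le> x \<and> x \<le> R \<and> x^4 - c * x^3 - 1 = 0"
    by (rule IVT[of "\<lambda>x. x^4 - c * x^3 - 1"]) (use fR R in \<open>auto intro!: continuous_intros\<close>)
  then obtain x where x: "0 \<le> x" "x^4 - c * x^3 - 1 = 0" by auto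
  have "x \<noteq> 0" using x by auto
  thus ?thesis using x by (intro exI[of _ x]) auto
qed

lemma psd_trace: assumes sys: "is_system m k d V" and B: "B \<in> carrier_mat d d"
  shows "Re (mtrace (adj B * RS_op m d V * B)) \<ge> 0"
proof -
  have c: "\<And>i. i < m \<Longrightarrow> adj (V i) * V i \<in> carrier_mat d d" using sys unfolding is_system_def
    by (metis adj_carrier mult_carrier_mat)
  have Vc: "\<And>i. i < m \<Longrightarrow> V i \<in> carrier_mat (k i) d" using sys unfolding is_system_def by auto
  have "adj B * RS_op m d V * B = msum d (\<lambda>i. adj B * (adj (V i) * V i) * B) m"
    unfolding RS_op_msum using B c by (intro msum_mult) auto
  also have "\<dots> = msum d (\<lambda>i. adj (V i * B) * (V i * B)) m"
  proof (rule msum_cong)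
    fix i assume i: "i < m"
    show "adj B * (adj (V i) * V i) * B = adj (V i * B) * (V i * B)"
      unfolding adj_mult[OF Vc[OF i] B] using assoc4[OF adj_carrier[OF B] adj_carrier[OF Vc[OF i]] Vc[OF i] B] .
  qed
  finally have e: "mtrace (adj B * RS_op m d V * B) = (\<Sum>i<m. mtrace (adj (V i * B) * (V i * B)))"
    using mtrace_msum[of m "\<lambda>i. adj (V i * B) * (V i * B)" d] Vc B by (metis adj_carrier mult_carrier_mat)
  show ?thesis unfolding e Re_sum
  proof (intro sum_nonneg)
    fix i assume "i \<in> {..<m}"
    hence "V i * B \<in> carrier_mat (k i) d" using Vc[of i] B by auto
    thus "0 \<le> Re (mtrace (adj (V i * B) * (V i * B)))" by (rule mtrace_adj_self_nonneg)
  qed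
qed


lemma tr_sand_add: assumes "Z \<in> carrier_mat n n" "A \<in> carrier_mat n n" "B \<in> carrier_mat n n"
  shows "mtrace (Z * (A + B) * Z) = mtrace (Z * A * Z) + mtrace (Z * B * Z)"
proof -
  have "Z * (A + B) * Z = Z * A * Z + Z * B * Z" using assms
    by (simp add: mult_add_distrib_mat[of Z n n] add_mult_distrib_mat[of _ n n])
  thus ?thesis using assms by (simp add: mtrace_add[of _ n])
qed

lemma tr_sand_smult: assumes "Z \<in> carrier_mat n n" "A \<in> carrier_mat n n"
  shows "mtrace (Z * (a \<cdot>\<^sub>m A) * Z) = a * mtrace (Z * A * Z)"
proof -
  have "Z * (a \<cdot>\<^sub>m A) * Z = a \<cdot>\<^sub>m (Z * A * Z)" using assms
    by (simp add: mult_smult_distrib[of Z n n] mult_smult_assoc_mat[of _ n n])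
  thus ?thesis using assms by (simp add: mtrace_smult[of _ n])
qed

lemma scalar_from_eq:
  assumes S: "S \<in> carrier_mat d d" and T: "T \<in> carrier_mat d d" and ST: "S * T = 1\<^sub>m d"
  and hS: "adj S = S" and psd: "\<And>B. B \<in> carrier_mat d d \<Longrightarrow> Re (mtrace (adj B * S * B)) \<ge> 0"
  and G: "S - T * T * T = complex_of_real c \<cdot>\<^sub>m 1\<^sub>m d"
  shows "\<exists>r>0. S = complex_of_real r \<cdot>\<^sub>m 1\<^sub>m d"
proof -
  define S2 where "S2 = S * S"
  define S3 where "S3 = S2 * S"
  define S4 where "S4 = S3 * S"
  have S2c: "S2 \<in> carrier_mat d d" and S3c: "S3 \<in> carrier_mat d d" and S4c: "S4 \<in> carrier_mat d d"
    unfolding S2_def S3_def S4_def using S by auto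
  have T3c: "T * T * T \<in> carrier_mat d d" using T by auto
  have S3T: "S3 * T = S2" unfolding S3_def using assoc_mult_mat[OF S2c S T] ST S2c by simp
  have S2T: "S2 * T = S" unfolding S2_def using assoc_mult_mat[OF S S T] ST S by simp
  have E1: "S3 * (T * T * T) = 1\<^sub>m d"
  proof -
    have "S3 * (T * T * T) = ((S3 * T) * T) * T"
      using S3c T by (simp add: assoc_mult_mat[of _ d d _ d _ d])
    thus ?thesis unfolding S3T S2T ST .
  qed
  have E2: "S4 - 1\<^sub>m d = complex_of_real c \<cdot>\<^sub>m S3"
  proof -
    have "S3 * (S - T * T * T) = S3 * S - S3 * (T * T * T)" by (rule mult_minus_distrib_mat[OF S3c S T3c])
    also have "\<dots> = S4 - 1\<^sub>m d" unfolding E1 S4_def ..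
    finally have "S4 - 1\<^sub>m d = S3 * (complex_of_real c \<cdot>\<^sub>m 1\<^sub>m d)" unfolding G by simp
    also have "\<dots> = complex_of_real c \<cdot>\<^sub>m S3" using mult_smult_distrib[OF S3c, of "1\<^sub>m d" d] S3c by simp
    finally show ?thesis .
  qed
  have E2e: "\<And>a b. a < d \<Longrightarrow> b < d \<Longrightarrow> S4 $$ (a,b) = complex_of_real c * S3 $$ (a,b) + (if a = b then 1 else 0)"
  proof -
    fix a b assume ab: "a < d" "b < d"
    have "(S4 - 1\<^sub>m d) $$ (a,b) = (complex_of_real c \<cdot>\<^sub>m S3) $$ (a,b)" using E2 by simp
    thus "S4 $$ (a,b) = complex_of_real c * S3 $$ (a,b) + (if a = b then 1 else 0)" using ab S3c S4c by (auto simp: diff_eq_eq)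
  qed
  obtain r where r: "r > 0" "r^4 - c * r^3 - 1 = 0" using quartic_root[of c] by auto
  define b where "b = 1 / r^3"
  have br3: "b * r^3 = 1" unfolding b_def using r(1) by simp
  have bmr: "b - r = - c"
  proof -
    have "r^4 - c * r^3 - 1 = r^3 * (r - c - b)" unfolding b_def using r(1) by (simp add: field_simps power_numeral_reduce)
    hence "r - c - b = 0" using r by simp
    thus ?thesis by simp
  qed
  have bpos: "b > 0" unfolding b_def using r(1) by simp
  define cb where "cb = complex_of_real b"
  define cr where "cr = complex_of_real r"
  define Q where "Q = S3 + cb \<cdot>\<^sub>m S2 + (cb * cr) \<cdot>\<^sub>m S + (cb * cr * cr) \<cdot>\<^sub>m 1\<^sub>m d"
  define Z where "Z = S - cr \<cdot>\<^sub>m 1\<^sub>m d"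
  have Qc: "Q \<in> carrier_mat d d" unfolding Q_def using S S2c S3c by auto
  have Zc: "Z \<in> carrier_mat d d" unfolding Z_def using S by auto
  have QS: "Q * S = S4 + cb \<cdot>\<^sub>m S3 + (cb * cr) \<cdot>\<^sub>m S2 + (cb * cr * cr) \<cdot>\<^sub>m S"
    unfolding Q_def S4_def S3_def S2_def using S
    by (simp add: add_mult_distrib_mat[of _ d d _ S d] mult_smult_assoc_mat[of _ d d S d])
  have QZ0: "Q * Z = 0\<^sub>m d d"
  proof -
    have "Q * Z = Q * S - Q * (cr \<cdot>\<^sub>m 1\<^sub>m d)" unfolding Z_def by (rule mult_minus_distrib_mat[OF Qc S]) simp
    also have "Q * (cr \<cdot>\<^sub>m 1\<^sub>m d) = cr \<cdot>\<^sub>m Q" using mult_smult_distrib[OF Qc, of "1\<^sub>m d" d] Qc by simp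
    finally have QZ: "Q * Z = Q * S - cr \<cdot>\<^sub>m Q" .
    show ?thesis
    proof (rule eq_matI)
      fix i j assume ij: "i < dim_row (0\<^sub>m d d :: complex mat)" "j < dim_col (0\<^sub>m d d :: complex mat)"
      hence ij: "i < d" "j < d" by auto
      have "(Q * Z) $$ (i,j) = S4 $$ (i,j) + cb * S3 $$ (i,j) + cb * cr * S2 $$ (i,j) + cb * cr * cr * S $$ (i,j)
          - cr * (S3 $$ (i,j) + cb * S2 $$ (i,j) + cb * cr * S $$ (i,j) + cb * cr * cr * (if i = j then 1 else 0))"
        unfolding QZ QS unfolding Q_def using ij S S2c S3c S4c by simp
      also have "\<dots> = (complex_of_real c + cb - cr) * S3 $$ (i,j) + (1 - cb * cr * cr * cr) * (if i = j then 1 else 0)"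
        unfolding E2e[OF ij] by (simp add: algebra_simps)
      also have "complex_of_real c + cb - cr = 0" unfolding cb_def cr_def using bmr
        by (metis add.commute add_uminus_conv_diff diff_add_cancel diff_self of_real_add of_real_minus)
      also have "1 - cb * cr * cr * cr = 0" unfolding cb_def cr_def using br3
        by (metis diff_self of_real_1 of_real_mult power3_eq_cube mult.assoc)
      finally show "(Q * Z) $$ (i,j) = 0\<^sub>m d d $$ (i,j)" using ij by simp
    qed (use Qc Zc in auto)
  qed
  have hZ: "adj Z = Z" unfolding Z_def cr_def using S hS
    by (simp add: adj_minus[of _ d d] adj_smult)
  have "Z * Q * Z = Z * (Q * Z)" using Zc Qc by (simp add: assoc_mult_mat[of _ d d _ d _ d])
  hence tr0: "mtrace (Z * Q * Z) = 0" unfolding QZ0 using Zc unfolding mtrace_def by auto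
  have exp: "mtrace (Z * Q * Z) = mtrace (Z * S3 * Z) + cb * mtrace (Z * S2 * Z) + (cb * cr) * mtrace (Z * S * Z)
      + (cb * cr * cr) * mtrace (Z * 1\<^sub>m d * Z)"
    unfolding Q_def using Zc S S2c S3c
    by (simp add: tr_sand_add[of _ d] tr_sand_smult[of _ d])
  have SZ: "S * Z \<in> carrier_mat d d" using S Zc by auto
  have aSZ: "adj (S * Z) = Z * S" using adj_mult[OF S Zc] hS hZ by simp
  have t3: "Re (mtrace (Z * S3 * Z)) \<ge> 0"
  proof -
    have "Z * S3 * Z = adj (S * Z) * S * (S * Z)" unfolding aSZ S3_def S2_def using Zc S
      by (simp add: assoc_mult_mat[of _ d d _ d _ d])
    thus ?thesis using psd[OF SZ] by simp
  qed
  have t2: "Re (mtrace (Z * S2 * Z)) \<ge> 0"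
  proof -
    have "Z * S2 * Z = adj (S * Z) * (S * Z)" unfolding aSZ S2_def using Zc S
      by (simp add: assoc_mult_mat[of _ d d _ d _ d])
    thus ?thesis using mtrace_adj_self_nonneg[OF SZ] by simp
  qed
  have t1: "Re (mtrace (Z * S * Z)) \<ge> 0" using psd[OF Zc] hZ by simp
  have ZZ: "Z * 1\<^sub>m d * Z = adj Z * Z" using hZ Zc by simp
  have t0: "Re (mtrace (Z * 1\<^sub>m d * Z)) \<ge> 0" unfolding ZZ by (rule mtrace_adj_self_nonneg[OF Zc])
  have "0 = Re (mtrace (Z * S3 * Z)) + b * Re (mtrace (Z * S2 * Z)) + (b * r) * Re (mtrace (Z * S * Z))
      + (b * r * r) * Re (mtrace (Z * 1\<^sub>m d * Z))"
    using arg_cong[OF exp[unfolded tr0], of Re] unfolding cb_def cr_def by simp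
  moreover have "b * Re (mtrace (Z * S2 * Z)) \<ge> 0" using bpos t2 by simp
  moreover have "(b * r) * Re (mtrace (Z * S * Z)) \<ge> 0" using bpos r(1) t1 by simp
  ultimately have "(b * r * r) * Re (mtrace (Z * 1\<^sub>m d * Z)) \<le> 0" using t3 by linarith
  moreover have "b * r * r > 0" using bpos r(1) by simp
  ultimately have "Re (mtrace (Z * 1\<^sub>m d * Z)) \<le> 0"
    by (metis linorder_not_le mult_pos_pos)
  hence re0: "Re (mtrace (adj Z * Z)) = 0" using t0 unfolding ZZ by simp
  have "Im (mtrace (adj Z * Z)) = 0" using mtrace_adj_self[OF Zc] by simp
  hence "mtrace (adj Z * Z) = 0" using re0 by (simp add: complex_eq_iff)
  hence Z0: "Z = 0\<^sub>m d d" by (rule mtrace_adj_self_zero[OF Zc])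
  have "S = cr \<cdot>\<^sub>m 1\<^sub>m d"
  proof (rule eq_matI)
    fix i j assume ij: "i < dim_row (cr \<cdot>\<^sub>m 1\<^sub>m d)" "j < dim_col (cr \<cdot>\<^sub>m 1\<^sub>m d)"
    hence ij: "i < d" "j < d" by auto
    have "Z $$ (i,j) = 0" using Z0 ij by simp
    thus "S $$ (i,j) = (cr \<cdot>\<^sub>m 1\<^sub>m d) $$ (i,j)" unfolding Z_def using ij S by simp
  qed (use S in auto)
  thus ?thesis unfolding cr_def using r(1) by blast
qed


theorem lemma6p4:
  fixes m d :: nat and k :: "nat \<Rightarrow> nat" and v :: "nat \<Rightarrow> real"
    and V :: "nat \<Rightarrow> complex mat"
  assumes "m \<ge> 1" and "d \<ge> 1"
    and "\<forall>i<m. 1 \<le> k i \<and> k i \<le> d"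
    and "\<forall>i<m. v i > 0"
    and "V \<in> Pv v m k d"
    and "irreducible_sys m d V"
  defines "\<tau> \<equiv> (\<Sum>i<m. (v i)\<^sup>2 * real (k i))"
  shows "(local_min_FP v m k d V (can_dual m d V) \<longleftrightarrow> global_min_FP v m k d V (can_dual m d V))
       \<and> (global_min_FP v m k d V (can_dual m d V) \<longleftrightarrow>
            RS_op m d V = complex_of_real (\<tau> / real d) \<cdot>\<^sub>m 1\<^sub>m d)"
proof -
  note V = assms(5)
  have tau: "\<tau> > 0"
  proof -
    have "v 0 > 0" "k 0 \<ge> 1" using assms(1,3,4) by auto
    hence "0 < (v 0)\<^sup>2 * real (k 0)" by simp
    also have "\<dots> \<le> \<tau>" unfolding \<tau>_def using assms(1)
      by (intro member_le_sum) auto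
    finally show ?thesis .
  qed
  have sys: "is_system m k d V" using Pv_system[OF V] .
  have Vc: "\<And>i. i < m \<Longrightarrow> V i \<in> carrier_mat (k i) d" using sys unfolding is_system_def by auto
  note cdf = can_dual_facts[OF V]
  define S0 where "S0 = RS_op m d V"
  define T0 where "T0 = inv2 S0"
  define G where "G = S0 - T0 * T0 * T0"
  have S0c: "S0 \<in> carrier_mat d d" unfolding S0_def by simp
  have T0c: "T0 \<in> carrier_mat d d" unfolding T0_def using S0c by simp
  have Gc: "G \<in> carrier_mat d d" unfolding G_def using S0c T0c by auto
  have hS: "adj S0 = S0" unfolding S0_def using RS_op_herm[OF sys] .
  have hT: "adj T0 = T0" unfolding T0_def S0_def using cdf(4) .
  have hG: "adj G = G"
  proof -
    have "adj (T0 * T0 * T0) = T0 * T0 * T0" using T0c hT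
      by (simp add: adj_mult[of _ d d _ d] assoc_mult_mat[of _ d d _ d _ d])
    thus ?thesis unfolding G_def using S0c T0c hS by (simp add: adj_minus[of _ d d])
  qed
  have tr: "mtrace S0 = complex_of_real \<tau>" unfolding S0_def \<tau>_def by (rule trace_RS_op_Pv[OF V])
  have L2T: "RS_op m d V = complex_of_real (\<tau> / real d) \<cdot>\<^sub>m 1\<^sub>m d"
    if lm: "local_min_FP v m k d V (can_dual m d V)"
  proof -
    have comm: "G * (adj (V j) * V j) = (adj (V j) * V j) * G" if j: "j < m" for j
    proof (rule ccontr)
      assume ne: "G * (adj (V j) * V j) \<noteq> (adj (V j) * V j) * G"
      define P where "P = adj (V j) * V j"
      have Pc: "P \<in> carrier_mat d d" unfolding P_def using Vc[OF j] by auto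
      have "G * P - P * G \<noteq> 0\<^sub>m d d"
      proof
        assume z: "G * P - P * G = 0\<^sub>m d d"
        have "G * P = P * G"
        proof (rule eq_matI)
          fix a b assume ab: "a < dim_row (P * G)" "b < dim_col (P * G)"
          hence ab: "a < d" "b < d" using Pc Gc by auto
          have "(G * P - P * G) $$ (a,b) = 0" using z ab by simp
          thus "(G * P) $$ (a,b) = (P * G) $$ (a,b)" using ab Pc Gc by simp
        qed (use Pc Gc in auto)
        thus False using ne unfolding P_def by simp
      qed
      from descent[OF V j S0_def T0_def P_def G_def refl this] lm show False by simp
    qed
    have "G \<in> {A \<in> carrier_mat d d. \<forall>i<m. A * (adj (V i) * V i) = (adj (V i) * V i) * A}"
      using Gc comm by auto
    hence "G \<in> {c \<cdot>\<^sub>m 1\<^sub>m d | c. True}" using assms(6) unfolding irreducible_sys_def by simp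
    then obtain c where c: "G = c \<cdot>\<^sub>m 1\<^sub>m d" by auto
    have "cnj c = c"
    proof -
      have "adj (c \<cdot>\<^sub>m 1\<^sub>m d) = c \<cdot>\<^sub>m 1\<^sub>m d" using hG c by simp
      hence "(cnj c \<cdot>\<^sub>m 1\<^sub>m d) $$ (0,0) = (c \<cdot>\<^sub>m 1\<^sub>m d) $$ (0,0)" by (simp add: adj_smult)
      thus ?thesis using assms(2) by simp
    qed
    hence creal: "c = complex_of_real (Re c)" by (metis Reals_cnj_iff complex_is_Real_iff of_real_Re)
    have G': "S0 - T0 * T0 * T0 = complex_of_real (Re c) \<cdot>\<^sub>m 1\<^sub>m d" using c creal unfolding G_def by simp
    have psd: "\<And>B. B \<in> carrier_mat d d \<Longrightarrow> Re (mtrace (adj B * S0 * B)) \<ge> 0"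
      unfolding S0_def by (rule psd_trace[OF sys])
    have ST: "S0 * T0 = 1\<^sub>m d" unfolding T0_def S0_def using cdf(2) .
    obtain r where r: "r > 0" "S0 = complex_of_real r \<cdot>\<^sub>m 1\<^sub>m d"
      using scalar_from_eq[OF S0c T0c ST hS psd G'] by auto
    have "mtrace S0 = complex_of_real r * of_nat d" unfolding r(2) by (simp add: mtrace_smult[of _ d] mtrace_one)
    hence "complex_of_real \<tau> = complex_of_real (r * real d)" using tr by simp
    hence "\<tau> = r * real d" by (simp only: of_real_eq_iff)
    hence "r = \<tau> / real d" using assms(2) by (simp add: field_simps)
    thus ?thesis using r(2) unfolding S0_def by simp
  qed
  have T2G: "global_min_FP v m k d V (can_dual m d V)" if "RS_op m d V = complex_of_real (\<tau> / real d) \<cdot>\<^sub>m 1\<^sub>m d"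
    by (rule tight_global[OF V assms(2) _ tau that]) (simp add: \<tau>_def)
  have G2L: "local_min_FP v m k d V (can_dual m d V)" if g: "global_min_FP v m k d V (can_dual m d V)"
    using g unfolding global_min_FP_def local_min_FP_def by (intro conjI exI[of _ 1]) auto
  show ?thesis using L2T T2G G2L by blast
qed


end
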